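(* Let $\hat A$ be a collection of pairwise disjoint nonempty subsets of $S^1$ with $|\hat A|\ge 4$ such that $\bigcup_{J\in\hat A}J$ is dense in $S^1$ and each $J\in\hat A$ is either a single point or an open interval. Let $h:\hat A\to\hat A$ be a bijection which maps the set of non-singleton elements of $\hat A$ onto itself. Then $h$ is order preserving if and only if, whenever $J_1,J_2,J_3,J_4\in\hat A$ satisfy $J_1<J_2<J_3<J_4$, the sets $h(J_3)$ and $h(J_4)$ lie in the same connected component of $S^1\setminus(h(J_1)\cup h(J_2))$.
   Context: For four distinct points $x_1,x_2,x_3,x_4\in S^1$ write $x_1<x_2<x_3<x_4$ if there is a homeomorphism $g:S^1\to S^1$ (possibly orientation reversing) with $g(i^n)=x_n$ for $n=1,2,3,4$ (here $S^1\subset\mathbb{C}$ is the unit circle), i.e. the points occur in this cyclic order in one of the two directions. For pairwise disjoint nonempty sets $J_1,\dots,J_4\subset S^1$ write $J_1<J_2<J_3<J_4$ if $x_1<x_2<x_3<x_4$ whenever $x_i\in J_i$ for each $i$. If $\hat A$ is a collection of pairwise disjoint subsets of $S^1$, a bijection $h:\hat A\to\hat A$ is order preserving if there exists a homeomorphism $g:S^1\to S^1$ with $g(J)=h(J)$ for every $J\in\hat A$; such $g$ is called compatible with $h$. *)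

theory Defs
  imports "HOL-Analysis.Analysis"
begin

abbreviation S1 :: "complex set" where "S1 \<equiv> sphere 0 1"

text \<open>Self-homeomorphisms of S^1 (possibly orientation reversing).\<close>
definition circle_homeo :: "(complex \<Rightarrow> complex) \<Rightarrow> bool" where
  "circle_homeo g \<longleftrightarrow> (\<exists>g'. homeomorphism S1 S1 g g')"

text \<open>x1 < x2 < x3 < x4: some homeomorphism g of S^1 with g(i^n) = x_n.\<close>
definition cyc4 :: "complex \<Rightarrow> complex \<Rightarrow> complex \<Rightarrow> complex \<Rightarrow> bool" where
  "cyc4 x1 x2 x3 x4 \<longleftrightarrow> x1 \<in> S1 \<and> x2 \<in> S1 \<and> x3 \<in> S1 \<and> x4 \<in> S1 \<and>
     distinct [x1, x2, x3, x4] \<and>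
     (\<exists>g. circle_homeo g \<and> g (\<i>^1) = x1 \<and> g (\<i>^2) = x2 \<and> g (\<i>^3) = x3 \<and> g (\<i>^4) = x4)"

definition set_cyc4 :: "complex set \<Rightarrow> complex set \<Rightarrow> complex set \<Rightarrow> complex set \<Rightarrow> bool" where
  "set_cyc4 J1 J2 J3 J4 \<longleftrightarrow>
     J1 \<noteq> {} \<and> J2 \<noteq> {} \<and> J3 \<noteq> {} \<and> J4 \<noteq> {} \<and>
     pairwise disjnt {J1, J2, J3, J4} \<and> distinct [J1, J2, J3, J4] \<and>
     (\<forall>x1\<in>J1. \<forall>x2\<in>J2. \<forall>x3\<in>J3. \<forall>x4\<in>J4. cyc4 x1 x2 x3 x4)"

definition open_arc :: "complex set \<Rightarrow> bool" where
  "open_arc J \<longleftrightarrow> (\<exists>a b. a < b \<and> b - a < 2 * pi \<and> J = cis ` {a<..<b})"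

definition order_preserving :: "complex set set \<Rightarrow> (complex set \<Rightarrow> complex set) \<Rightarrow> bool" where
  "order_preserving A h \<longleftrightarrow> (\<exists>g. circle_homeo g \<and> (\<forall>J\<in>A. g ` J = h J))"

end

theory Submission
  imports Defs
begin

lemma cis_eq_iff_int: "cis s = cis t \<longleftrightarrow> (\<exists>n::int. s = t + 2 * pi * n)"
proof -
  have "cis s = cis t \<longleftrightarrow> sin s = sin t \<and> cos s = cos t"
    by (auto simp: complex_eq_iff)
  also have "\<dots> \<longleftrightarrow> (\<exists>n::int. s = t + 2 * pi * n)"
    by (rule sin_cos_eq_iff)
  finally show ?thesis .
qed

lemma cis_shift_int: "cis (t + 2 * pi * of_int n) = cis t"
  using cis_eq_iff_int by blast

lemma cis_plus_2pi [simp]: "cis (t + 2 * pi) = cis t"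
  using cis_shift_int[of t 1] by simp

lemma cis_minus_2pi [simp]: "cis (t - 2 * pi) = cis t"
  using cis_shift_int[of t "-1"] by simp

lemma cis_in_S1 [simp]: "cis t \<in> S1"
  by simp

lemma S1_cis: "z \<in> S1 \<Longrightarrow> \<exists>t. z = cis t"
proof -
  assume "z \<in> S1"
  then have "norm z = 1" by simp
  then have "exp(\<i> * of_real (Arg2pi z)) = z" using complex_norm_eq_1_exp by blast
  then show ?thesis by (metis cis_conv_exp)
qed

lemma int_small_zero:
  fixes n :: int
  assumes "\<bar>2 * pi * n\<bar> < 2 * pi"
  shows "n = 0"
proof (rule ccontr)
  assume "n \<noteq> 0"
  then have "1 \<le> \<bar>real_of_int n\<bar>" by linarith
  then have "2 * pi * 1 \<le> 2 * pi * \<bar>real_of_int n\<bar>" by (intro mult_left_mono) auto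
  then show False using assms by (simp add: abs_mult)
qed

lemma lift_window:
  assumes "z \<in> S1"
  shows "\<exists>t. w \<le> t \<and> t < w + 2 * pi \<and> z = cis t"
proof -
  obtain s where s: "z = cis s" using S1_cis assms by blast
  define n where "n = floor ((s - w) / (2 * pi))"
  have n1: "real_of_int n \<le> (s - w) / (2 * pi)" unfolding n_def by linarith
  have n2: "(s - w) / (2 * pi) < real_of_int n + 1" unfolding n_def by linarith
  have a: "2 * pi * real_of_int n \<le> s - w" using n1 by (simp add: field_simps)
  have b: "s - w < 2 * pi * (real_of_int n + 1)" using n2 by (simp add: field_simps)
  have "z = cis (s + 2 * pi * of_int (- n))" using s cis_shift_int by metis
  then show ?thesis
    by (intro exI[of _ "s + 2 * pi * of_int (- n)"]) (use a b in \<open>auto simp: algebra_simps\<close>)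
qed

lemma lift_unique:
  assumes "cis t = cis t'" "\<bar>t - t'\<bar> < 2 * pi"
  shows "t = t'"
proof -
  obtain n :: int where n: "t = t' + 2 * pi * n" using assms(1) cis_eq_iff_int by blast
  then have "n = 0" using assms(2) int_small_zero[of n] by simp
  then show ?thesis using n by simp
qed

lemma lift_window_open:
  assumes "z \<in> S1" "z \<noteq> cis w"
  shows "\<exists>t. w < t \<and> t < w + 2 * pi \<and> z = cis t"
  using lift_window[OF assms(1), of w] assms(2) by (metis order_le_less)

definition ccw :: "complex \<Rightarrow> complex \<Rightarrow> complex \<Rightarrow> bool" where
  "ccw a b c \<longleftrightarrow> (\<exists>s t u. a = cis s \<and> b = cis t \<and> c = cis u \<and> s < t \<and> t < u \<and> u < s + 2 * pi)"

definition r3 :: "real \<Rightarrow> real \<Rightarrow> real \<Rightarrow> bool" where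
  "r3 s t u \<longleftrightarrow> (s < t \<and> t < u) \<or> (t < u \<and> u < s) \<or> (u < s \<and> s < t)"

lemma ccw_S1: "ccw a b c \<Longrightarrow> a \<in> S1 \<and> b \<in> S1 \<and> c \<in> S1"
  unfolding ccw_def by auto

lemma ccw_base:
  assumes "ccw a b c" "a = cis s"
  shows "\<exists>t u. b = cis t \<and> c = cis u \<and> s < t \<and> t < u \<and> u < s + 2 * pi"
proof -
  obtain s0 t0 u0 where h: "a = cis s0" "b = cis t0" "c = cis u0" "s0 < t0" "t0 < u0" "u0 < s0 + 2 * pi"
    using assms(1) unfolding ccw_def by blast
  obtain n :: int where n: "s = s0 + 2 * pi * n" using assms(2) h(1) cis_eq_iff_int by metis
  show ?thesis
    by (rule exI[of _ "t0 + 2 * pi * n"], rule exI[of _ "u0 + 2 * pi * n"])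
      (use h n in \<open>auto simp: cis_shift_int\<close>)
qed

lemma ccw_cyclic: "ccw a b c \<Longrightarrow> ccw b c a"
  unfolding ccw_def
  apply clarify
  subgoal for s t u
    by (rule exI[of _ t], rule exI[of _ u], rule exI[of _ "s + 2 * pi"])
      auto
  done

lemma window_eq:
  assumes "cis t = cis t'" "w \<le> t" "t < w + 2 * pi" "w \<le> t'" "t' < w + 2 * pi"
  shows "t = t'"
  using lift_unique[OF assms(1)] assms by linarith

lemma ccw_asym: "ccw a b c \<Longrightarrow> ccw a c b \<Longrightarrow> False"
proof -
  assume 1: "ccw a b c" and 2: "ccw a c b"
  obtain s t u where h: "a = cis s" "b = cis t" "c = cis u" "s < t" "t < u" "u < s + 2 * pi"
    using 1 unfolding ccw_def by blast
  obtain u' t' where h2: "c = cis u'" "b = cis t'" "s < u'" "u' < t'" "t' < s + 2 * pi"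
    using ccw_base[OF 2 h(1)] by blast
  have "t = t'" using window_eq[of t t' s] h h2 by auto
  moreover have "u = u'" using window_eq[of u u' s] h h2 by auto
  ultimately show False using h h2 by linarith
qed

lemma ccw_win:
  assumes "w \<le> s" "s < w + 2 * pi" "w \<le> t" "t < w + 2 * pi" "w \<le> u" "u < w + 2 * pi"
    "s \<noteq> t" "t \<noteq> u" "s \<noteq> u"
  shows "ccw (cis s) (cis t) (cis u) \<longleftrightarrow> r3 s t u"
proof
  have d1: "\<And>s t u. s < t \<Longrightarrow> t < u \<Longrightarrow> u < s + 2 * pi \<Longrightarrow> ccw (cis s) (cis t) (cis u)"
    unfolding ccw_def by blast
  have pos: "r3 s t u \<Longrightarrow> ccw (cis s) (cis t) (cis u)"
  proof -
    assume "r3 s t u"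
    then consider "s < t \<and> t < u" | "t < u \<and> u < s" | "u < s \<and> s < t" unfolding r3_def by blast
    then show ?thesis
    proof cases
      case 1 then show ?thesis using d1 assms by auto
    next
      case 2 then have "ccw (cis t) (cis u) (cis s)" using d1 assms by auto
      then show ?thesis using ccw_cyclic by blast
    next
      case 3 then have "ccw (cis u) (cis s) (cis t)" using d1 assms by auto
      then show ?thesis using ccw_cyclic by blast
    qed
  qed
  show "r3 s t u \<Longrightarrow> ccw (cis s) (cis t) (cis u)" by (rule pos)
  assume c: "ccw (cis s) (cis t) (cis u)"
  show "r3 s t u"
  proof (rule ccontr)
    assume "\<not> r3 s t u"
    then have "r3 s u t" using assms unfolding r3_def by linarith
    have "ccw (cis s) (cis u) (cis t)"
    proof -
      have d1: "\<And>s t u. s < t \<Longrightarrow> t < u \<Longrightarrow> u < s + 2 * pi \<Longrightarrow> ccw (cis s) (cis t) (cis u)"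
        unfolding ccw_def by blast
      from \<open>r3 s u t\<close> consider "s < u \<and> u < t" | "u < t \<and> t < s" | "t < s \<and> s < u" unfolding r3_def by blast
      then show ?thesis
      proof cases
        case 1 then show ?thesis using d1 assms by auto
      next
        case 2 then have "ccw (cis u) (cis t) (cis s)" using d1 assms by auto
        then show ?thesis using ccw_cyclic by blast
      next
        case 3 then have "ccw (cis t) (cis s) (cis u)" using d1 assms by auto
        then show ?thesis using ccw_cyclic by blast
      qed
    qed
    then show False using ccw_asym c by blast
  qed
qed

lemma ccw_distinct:
  assumes "ccw a b c" shows "a \<noteq> b" "b \<noteq> c" "a \<noteq> c"
proof -
  obtain s t u where h: "a = cis s" "b = cis t" "c = cis u" "s < t" "t < u" "u < s + 2 * pi"
    using assms unfolding ccw_def by blast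
  show "a \<noteq> b" using window_eq[of s t s] h by fastforce
  show "b \<noteq> c" using window_eq[of t u s] h by fastforce
  show "a \<noteq> c" using window_eq[of s u s] h by fastforce
qed

lemma ccw_win_nd:
  assumes "w \<le> s" "s < w + 2 * pi" "w \<le> t" "t < w + 2 * pi" "w \<le> u" "u < w + 2 * pi"
  shows "ccw (cis s) (cis t) (cis u) \<longleftrightarrow> r3 s t u"
proof (cases "s \<noteq> t \<and> t \<noteq> u \<and> s \<noteq> u")
  case True then show ?thesis using ccw_win assms by blast
next
  case False
  then have "\<not> r3 s t u" unfolding r3_def by auto
  moreover have "\<not> ccw (cis s) (cis t) (cis u)" using False ccw_distinct by blast
  ultimately show ?thesis by blast
qed

lemma lift4:
  assumes "a \<in> S1" "b \<in> S1" "c \<in> S1" "d \<in> S1"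
  obtains sa sb sc sd where "a = cis sa" "b = cis sb" "c = cis sc" "d = cis sd"
    "0 \<le> sa" "sa < 2 * pi" "0 \<le> sb" "sb < 2 * pi" "0 \<le> sc" "sc < 2 * pi" "0 \<le> sd" "sd < 2 * pi"
  using lift_window[OF assms(1), of 0] lift_window[OF assms(2), of 0]
    lift_window[OF assms(3), of 0] lift_window[OF assms(4), of 0] by auto

lemma ccw_total:
  assumes "a \<in> S1" "b \<in> S1" "c \<in> S1" "a \<noteq> b" "b \<noteq> c" "a \<noteq> c"
  shows "ccw a b c \<or> ccw a c b"
proof -
  obtain sa sb sc sd where h: "a = cis sa" "b = cis sb" "c = cis sc"
    "0 \<le> sa" "sa < 2 * pi" "0 \<le> sb" "sb < 2 * pi" "0 \<le> sc" "sc < 2 * pi"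
    using lift4[OF assms(1,2,3,3)] by metis
  have "sa \<noteq> sb" "sb \<noteq> sc" "sa \<noteq> sc" using h assms by auto
  then have "r3 sa sb sc \<or> r3 sa sc sb" unfolding r3_def by linarith
  then show ?thesis using h ccw_win_nd[of 0 sa sb sc] ccw_win_nd[of 0 sa sc sb] by simp
qed

lemma ccw_swap:
  assumes "a \<in> S1" "b \<in> S1" "c \<in> S1" "a \<noteq> b" "b \<noteq> c" "a \<noteq> c"
  shows "ccw a c b \<longleftrightarrow> \<not> ccw a b c"
  using ccw_total[OF assms] ccw_asym by blast

definition cyc4a :: "complex \<Rightarrow> complex \<Rightarrow> complex \<Rightarrow> complex \<Rightarrow> bool" where
  "cyc4a x1 x2 x3 x4 \<longleftrightarrow> (ccw x1 x2 x3 \<and> ccw x1 x3 x4) \<or> (ccw x1 x4 x3 \<and> ccw x1 x3 x2)"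

text \<open>sepP a b c d: the pair a, b separates c from d\<close>
definition sepP :: "complex \<Rightarrow> complex \<Rightarrow> complex \<Rightarrow> complex \<Rightarrow> bool" where
  "sepP a b c d \<longleftrightarrow> cyc4a a c b d"

lemma cis_win_eq:
  "0 \<le> s \<Longrightarrow> s < 2 * pi \<Longrightarrow> 0 \<le> t \<Longrightarrow> t < 2 * pi \<Longrightarrow> cis s = cis t \<longleftrightarrow> s = t"
  using window_eq[of s t 0] by auto

lemma pts4_tac:
  assumes "a \<in> S1" "b \<in> S1" "c \<in> S1" "d \<in> S1"
    and "\<And>sa sb sc sd. 0 \<le> sa \<Longrightarrow> sa < 2 * pi \<Longrightarrow> 0 \<le> sb \<Longrightarrow> sb < 2 * pi \<Longrightarrow>
      0 \<le> sc \<Longrightarrow> sc < 2 * pi \<Longrightarrow> 0 \<le> sd \<Longrightarrow> sd < 2 * pi \<Longrightarrow>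
      P (cis sa) (cis sb) (cis sc) (cis sd)"
  shows "P a b c d"
proof -
  obtain sa sb sc sd where "a = cis sa" "b = cis sb" "c = cis sc" "d = cis sd"
    "0 \<le> sa" "sa < 2 * pi" "0 \<le> sb" "sb < 2 * pi" "0 \<le> sc" "sc < 2 * pi" "0 \<le> sd" "sd < 2 * pi"
    by (rule lift4[OF assms(1-4)])
  then show ?thesis using assms(5) by simp
qed

lemma cyc4a_distinct:
  assumes "cyc4a a b c d" shows "distinct [a, b, c, d]" "a \<in> S1" "b \<in> S1" "c \<in> S1" "d \<in> S1"
proof -
  have S: "a \<in> S1" "b \<in> S1" "c \<in> S1" "d \<in> S1"
    using assms ccw_S1 unfolding cyc4a_def by blast+
  then show "a \<in> S1" "b \<in> S1" "c \<in> S1" "d \<in> S1" by auto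
  have d: "a \<noteq> b \<and> b \<noteq> c \<and> a \<noteq> c \<and> a \<noteq> d \<and> c \<noteq> d \<and> b \<noteq> d"
  proof (cases "ccw a b c \<and> ccw a c d")
    case True
    then show ?thesis using ccw_distinct[of a b c] ccw_distinct[of a c d] ccw_asym[of a c b] by auto
  next
    case False
    then have "ccw a d c \<and> ccw a c b" using assms unfolding cyc4a_def by blast
    then show ?thesis using ccw_distinct[of a d c] ccw_distinct[of a c b] ccw_asym[of a c b] by auto
  qed
  then show "distinct [a, b, c, d]" using d by auto
qed

definition c4r :: "real \<Rightarrow> real \<Rightarrow> real \<Rightarrow> real \<Rightarrow> bool" where
  "c4r s1 s2 s3 s4 \<longleftrightarrow> (r3 s1 s2 s3 \<and> r3 s1 s3 s4) \<or> (r3 s1 s4 s3 \<and> r3 s1 s3 s2)"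

lemma c4r_sym1: "c4r a c b d \<Longrightarrow> c4r b c a d"
  unfolding c4r_def r3_def by smt
lemma c4r_sym2: "c4r a c b d \<Longrightarrow> c4r a d b c"
  unfolding c4r_def r3_def by smt
lemma c4r_sym3: "c4r a c b d \<Longrightarrow> c4r c a d b"
  unfolding c4r_def r3_def by smt
lemma c4r_F2: "a \<noteq> b \<Longrightarrow> a \<noteq> c \<Longrightarrow> a \<noteq> d \<Longrightarrow> b \<noteq> c \<Longrightarrow> b \<noteq> d \<Longrightarrow> c \<noteq> d \<Longrightarrow> c4r a c b d \<or> c4r a b c d \<or> c4r a b d c"
  unfolding c4r_def r3_def by smt
lemma c4r_F3: "a \<noteq> b \<Longrightarrow> a \<noteq> c \<Longrightarrow> a \<noteq> d \<Longrightarrow> b \<noteq> c \<Longrightarrow> b \<noteq> d \<Longrightarrow> c \<noteq> d \<Longrightarrow> ((r3 a b c \<longleftrightarrow> r3 a b d) \<longleftrightarrow> \<not> c4r a c b d)"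
  unfolding c4r_def r3_def by smt
lemma c4r_F4: "c4r a b c d \<Longrightarrow> \<not> c4r a c b d"
  unfolding c4r_def r3_def by smt

lemma ccw_win0:
  "0 \<le> s \<Longrightarrow> s < 2 * pi \<Longrightarrow> 0 \<le> t \<Longrightarrow> t < 2 * pi \<Longrightarrow> 0 \<le> u \<Longrightarrow> u < 2 * pi \<Longrightarrow>
   ccw (cis s) (cis t) (cis u) \<longleftrightarrow> r3 s t u"
  using ccw_win_nd[of 0 s t u] by simp

lemma cyc4a_lift:
  assumes "0 \<le> a" "a < 2 * pi" "0 \<le> b" "b < 2 * pi" "0 \<le> c" "c < 2 * pi" "0 \<le> d" "d < 2 * pi"
  shows "cyc4a (cis a) (cis b) (cis c) (cis d) \<longleftrightarrow> c4r a b c d"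
  unfolding cyc4a_def c4r_def using assms by (simp add: ccw_win0)

lemma sepP_sym:
  assumes "sepP a b c d" shows "sepP b a c d" "sepP a b d c" "sepP c d a b"
proof -
  have S: "a \<in> S1" "b \<in> S1" "c \<in> S1" "d \<in> S1" using cyc4a_distinct assms unfolding sepP_def by auto
  have "sepP a b c d \<longrightarrow> sepP b a c d \<and> sepP a b d c \<and> sepP c d a b"
    by (rule pts4_tac[OF S]) (simp add: sepP_def cyc4a_lift, meson c4r_sym1 c4r_sym2 c4r_sym3)
  then show "sepP b a c d" "sepP a b d c" "sepP c d a b" using assms by auto
qed

lemma sepP_F2:
  assumes "a \<in> S1" "b \<in> S1" "c \<in> S1" "d \<in> S1" "distinct [a,b,c,d]"
  shows "sepP a b c d \<or> sepP a c b d \<or> sepP a d b c"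
proof -
  have "distinct [a,b,c,d] \<longrightarrow> sepP a b c d \<or> sepP a c b d \<or> sepP a d b c"
    by (rule pts4_tac[OF assms(1-4)]) (simp add: sepP_def cyc4a_lift cis_win_eq, metis c4r_F2)
  then show ?thesis using assms by auto
qed

lemma sepP_F3:
  assumes "a \<in> S1" "b \<in> S1" "c \<in> S1" "d \<in> S1" "distinct [a,b,c,d]"
  shows "(ccw a b c \<longleftrightarrow> ccw a b d) \<longleftrightarrow> \<not> sepP a b c d"
proof -
  have "distinct [a,b,c,d] \<longrightarrow> ((ccw a b c \<longleftrightarrow> ccw a b d) \<longleftrightarrow> \<not> sepP a b c d)"
    by (rule pts4_tac[OF assms(1-4)]) (simp add: sepP_def cyc4a_lift cis_win_eq ccw_win0, metis c4r_F3)
  then show ?thesis using assms by auto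
qed

lemma sepP_F4:
  assumes "sepP a c b d" shows "\<not> sepP a b c d"
proof -
  have S: "a \<in> S1" "b \<in> S1" "c \<in> S1" "d \<in> S1" using cyc4a_distinct assms unfolding sepP_def by auto
  have "sepP a c b d \<longrightarrow> \<not> sepP a b c d"
    by (rule pts4_tac[OF S]) (simp add: sepP_def cyc4a_lift, metis c4r_F4)
  then show ?thesis using assms by auto
qed

lemma chain3:
  fixes P :: "'a \<Rightarrow> 'a \<Rightarrow> 'a \<Rightarrow> bool"
  assumes cyc: "\<And>a b c. a \<in> X \<Longrightarrow> b \<in> X \<Longrightarrow> c \<in> X \<Longrightarrow> distinct [a,b,c] \<Longrightarrow> P a b c = P b c a"
    and sw: "\<And>a b c. a \<in> X \<Longrightarrow> b \<in> X \<Longrightarrow> c \<in> X \<Longrightarrow> distinct [a,b,c] \<Longrightarrow> P a b c = P b a c"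
    and st: "\<And>a b c d. a \<in> X \<Longrightarrow> b \<in> X \<Longrightarrow> c \<in> X \<Longrightarrow> d \<in> X \<Longrightarrow> distinct [a,b,c,d] \<Longrightarrow> P a b c = P a b d"
    and X: "a \<in> X" "b \<in> X" "c \<in> X" "d \<in> X" "e \<in> X" "f \<in> X"
    and D: "distinct [a,b,c]" "distinct [d,e,f]"
  shows "P a b c = P d e f"
proof -
  have sym: "P a b c = P a c b" if "a \<in> X" "b \<in> X" "c \<in> X" "distinct [a,b,c]" for a b c
  proof -
    have "P a c b = P c a b" using sw[of a c b] that by auto
    also have "\<dots> = P a b c" using cyc[of c a b] that by auto
    finally show ?thesis by simp
  qed
  have R: "P a b c = P a b f" if "a \<in> X" "b \<in> X" "c \<in> X" "f \<in> X" "distinct [a,b,c]" "distinct [a,b,f]" for a b c f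
    using st[of a b c f] that by (cases "f = c") auto
  have H1: "P d b c = P d e f" if "b \<in> X" "c \<in> X" "e \<in> X" "f \<in> X" "d \<in> X"
    "distinct [d,b,c]" "distinct [d,e,f]" for b c d e f
  proof (cases "e = b")
    case True then show ?thesis using R[of d b c f] that by auto
  next
    case False
    show ?thesis
    proof (cases "e = c")
      case True
      have "P d b c = P d c b" using sym[of d b c] that by auto
      also have "\<dots> = P d c f" using R[of d c b f] that True by auto
      finally show ?thesis using True by simp
    next
      case False2: False
      have "P d b c = P d b e" using R[of d b c e] that False False2 by auto
      also have "\<dots> = P d e b" using sym[of d b e] that False by auto
      also have "\<dots> = P d e f" using R[of d e b f] that False by auto
      finally show ?thesis .
    qed
  qed
  have H2: "P a b c = P d e f" if dd: "d \<in> {a,b,c}"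
  proof -
    consider "d = a" | "d = b" | "d = c" using dd by auto
    then show ?thesis
    proof cases
      case 1 then show ?thesis using H1[of b c e f d] X D by auto
    next
      case 2
      have "P a b c = P b c a" using cyc[of a b c] X D by auto
      also have "\<dots> = P d e f" using H1[of c a e f d] X D 2 by auto
      finally show ?thesis .
    next
      case 3
      have "P a b c = P c a b" using cyc[of c a b] X D by auto
      also have "\<dots> = P d e f" using H1[of a b e f d] X D 3 by auto
      finally show ?thesis .
    qed
  qed
  show ?thesis
  proof (cases "d \<in> {a,b,c}")
    case True then show ?thesis using H2 by blast
  next
    case False
    have "P a b c = P b c a" using cyc[of a b c] X D by auto
    also have "\<dots> = P b c d" using R[of b c a d] X D False by auto
    also have "\<dots> = P d e f" using H1[of c d e f b] X D False sym
    proof -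
      have "P b c d = P d b c" using cyc[of d b c] X D False by auto
      also have "\<dots> = P d e f" using H1[of b c e f d] X D False by auto
      finally show ?thesis .
    qed
    finally show ?thesis .
  qed
qed

definition theta :: "complex \<Rightarrow> complex \<Rightarrow> real" where
  "theta a z = Arg2pi (z / a)"

lemma theta_prop:
  assumes "a \<in> S1" "z \<in> S1"
  shows "z = a * cis (theta a z)" "0 \<le> theta a z" "theta a z < 2 * pi"
proof -
  have n: "norm (z / a) = 1" using assms by (simp add: norm_divide)
  have "is_Arg (z / a) (Arg2pi (z / a))" using Arg2pi by blast
  then have "z / a = cis (theta a z)" unfolding is_Arg_def theta_def using n by (simp add: cis_conv_exp)
  moreover have "a \<noteq> 0" using assms by auto
  ultimately show "z = a * cis (theta a z)" by (simp add: field_simps)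
  show "0 \<le> theta a z" "theta a z < 2 * pi" unfolding theta_def using Arg2pi by auto
qed

lemma theta_cis:
  assumes "a = cis al" "z \<in> S1"
  shows "z = cis (al + theta a z)"
  using theta_prop(1)[of a z] assms by (simp add: cis_mult)

lemma theta_zero_iff:
  assumes "a \<in> S1" "z \<in> S1"
  shows "theta a z = 0 \<longleftrightarrow> z = a"
proof
  assume "theta a z = 0" then show "z = a" using theta_prop(1)[OF assms] by simp
next
  assume "z = a" then show "theta a z = 0" using assms unfolding theta_def by (auto simp: Arg2pi_eq_0)
qed

lemma theta_inj:
  assumes "a \<in> S1" "z \<in> S1" "y \<in> S1" "theta a z = theta a y"
  shows "z = y"
  using theta_prop(1)[OF assms(1,2)] theta_prop(1)[OF assms(1,3)] assms(4) by simp

lemma theta_cont: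
  assumes "a \<in> S1"
  shows "continuous_on (S1 - {a}) (theta a)"
proof -
  have c1: "continuous_on (- \<real>\<^sub>\<ge>\<^sub>0) Arg2pi"
    by (intro continuous_at_imp_continuous_on ballI continuous_at_Arg2pi) auto
  have c2: "continuous_on (S1 - {a}) (\<lambda>z. z / a)" using assms by (intro continuous_intros) auto
  have im: "(\<lambda>z. z / a) ` (S1 - {a}) \<subseteq> - \<real>\<^sub>\<ge>\<^sub>0"
  proof clarify
    fix z assume z: "z \<in> S1" "z \<noteq> a" "z / a \<in> \<real>\<^sub>\<ge>\<^sub>0"
    have "norm (z / a) = 1" using z assms by (simp add: norm_divide)
    have "Im (z / a) = 0" "Re (z / a) \<ge> 0" using z(3) complex_nonneg_Reals_iff by auto
    then have "z / a = 1" using \<open>norm (z / a) = 1\<close>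
      by (metis cmod_eq_Re complex_eqI abs_of_nonneg one_complex.simps)
    then show False using z assms by (auto simp: field_simps)
  qed
  show ?thesis unfolding theta_def
    using continuous_on_compose2[OF c1 c2 im] by simp
qed

lemma ccw_theta:
  assumes "a \<in> S1" "x \<in> S1" "y \<in> S1" "x \<noteq> a" "y \<noteq> a"
  shows "ccw a x y \<longleftrightarrow> theta a x < theta a y"
proof -
  obtain al where al: "a = cis al" using S1_cis assms by blast
  have tx: "0 < theta a x" using theta_prop[OF assms(1,2)] theta_zero_iff[OF assms(1,2)] assms by auto
  have ty: "0 < theta a y" using theta_prop[OF assms(1,3)] theta_zero_iff[OF assms(1,3)] assms by auto
  have "ccw a x y \<longleftrightarrow> ccw (cis al) (cis (al + theta a x)) (cis (al + theta a y))"
    using theta_cis[OF al assms(2)] theta_cis[OF al assms(3)] al by simp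
  also have "\<dots> \<longleftrightarrow> r3 al (al + theta a x) (al + theta a y)"
    using theta_prop[OF assms(1,2)] theta_prop[OF assms(1,3)] by (intro ccw_win_nd) auto
  also have "\<dots> \<longleftrightarrow> theta a x < theta a y" unfolding r3_def using tx ty by auto
  finally show ?thesis .
qed

lemma NC:
  assumes "connected C" "C \<subseteq> S1 - {a, c}" "b \<in> C" "d \<in> C" "a \<in> S1" "c \<in> S1"
  shows "\<not> sepP a c b d"
proof
  assume sp: "sepP a c b d"
  then have sp': "(ccw a b c \<and> ccw a c d) \<or> (ccw a d c \<and> ccw a c b)" unfolding sepP_def cyc4a_def .
  have bS: "b \<in> S1" "b \<noteq> a" "d \<in> S1" "d \<noteq> a" using assms by auto
  have "c \<noteq> a" using cyc4a_distinct(1)[of a b c d] sp unfolding sepP_def by auto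
  have con: "connected (theta a ` C)"
    using assms(1) continuous_on_subset[OF theta_cont[OF assms(5)]] assms(2)
    by (intro connected_continuous_image) auto
  have notin: "theta a c \<notin> theta a ` C"
  proof
    assume "theta a c \<in> theta a ` C"
    then obtain z where z: "z \<in> C" "theta a z = theta a c" by auto
    then have "z = c" using theta_inj[of a z c] assms by auto
    then show False using z assms by auto
  qed
  have e1: "ccw a b c \<longleftrightarrow> theta a b < theta a c" using ccw_theta[of a b c] assms bS \<open>c \<noteq> a\<close> by blast
  have e2: "ccw a c d \<longleftrightarrow> theta a c < theta a d" using ccw_theta[of a c d] assms bS \<open>c \<noteq> a\<close> by blast
  have e3: "ccw a d c \<longleftrightarrow> theta a d < theta a c" using ccw_theta[of a d c] assms bS \<open>c \<noteq> a\<close> by blast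
  have e4: "ccw a c b \<longleftrightarrow> theta a c < theta a b" using ccw_theta[of a c b] assms bS \<open>c \<noteq> a\<close> by blast
  from sp' consider "theta a b < theta a c" "theta a c < theta a d" | "theta a d < theta a c" "theta a c < theta a b"
    using e1 e2 e3 e4 by blast
  then show False
  proof cases
    case 1 then show ?thesis using con notin assms(3,4) unfolding connected_iff_interval
      by (meson imageI less_imp_le)
  next
    case 2 then show ?thesis using con notin assms(3,4) unfolding connected_iff_interval
      by (meson imageI less_imp_le)
  qed
qed

lemma VARY:
  assumes "connected J" "J \<subseteq> S1 - {b, c}" "x \<in> J" "x' \<in> J" "b \<in> S1" "c \<in> S1" "ccw x b c"
  shows "ccw x' b c"
proof (rule ccontr)
  assume n: "\<not> ccw x' b c"
  have d: "b \<noteq> c" "x' \<in> S1" "x' \<noteq> b" "x' \<noteq> c" using ccw_distinct[OF assms(7)] assms by auto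
  have "ccw x' c b" using ccw_total[of x' b c] d assms n by auto
  then have "ccw b x' c" using ccw_cyclic by blast
  moreover have "ccw b c x" using ccw_cyclic assms(7) by blast
  ultimately have "sepP b c x' x" unfolding sepP_def cyc4a_def by blast
  then show False using NC[OF assms(1,2) assms(4) assms(3) assms(5,6)] by blast
qed

lemma dense_lift:
  assumes "S1 \<subseteq> closure V" "a < b" "V \<subseteq> S1"
  shows "\<exists>s. a < s \<and> s < b \<and> cis s \<in> V"
proof -
  define m where "m = (a + b) / 2"
  define w where "w = cis m"
  define e where "e = (b - a) / 2"
  have e: "e > 0" using assms unfolding e_def by simp
  have "continuous (at 1) Arg" by (rule continuous_at_Arg) auto
  then have "\<exists>dl>0. \<forall>y. dist y 1 < dl \<longrightarrow> dist (Arg y) (Arg 1) < e"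
    unfolding continuous_at_eps_delta using e by blast
  then obtain dl where dl: "dl > 0" "\<And>y. dist y 1 < dl \<Longrightarrow> dist (Arg y) (Arg 1) < e"
    by blast
  have "w \<in> closure V" using assms(1) unfolding w_def by auto
  then obtain v where v: "v \<in> V" "dist w v < dl" using closure_approachableD dl(1) by blast
  have w1: "norm w = 1" unfolding w_def by simp
  have vS: "v \<in> S1" using v assms(3) by auto
  then have v1: "norm v = 1" by simp
  have w0: "w \<noteq> 0" using w1 by auto
  have "v / w - 1 = (v - w) / w" using w0 by (simp add: diff_divide_distrib)
  then have "dist (v / w) 1 = dist w v" using w1 by (simp add: dist_norm norm_divide norm_minus_commute)
  then have "dist (v / w) 1 < dl" using v by simp
  then have ar: "\<bar>Arg (v / w)\<bar> < e" using dl(2) by (simp add: dist_real_def)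
  have nz: "v / w \<noteq> 0" using v1 w1 by auto
  have "cis (Arg (v / w)) = sgn (v / w)" using cis_Arg[OF nz] .
  also have "\<dots> = v / w" using v1 w1 by (simp add: sgn_div_norm norm_divide)
  finally have "w * cis (Arg (v / w)) = v" using w1 by auto
  then have "v = cis (m + Arg (v / w))" unfolding w_def by (simp add: cis_mult)
  moreover have "a < m + Arg (v / w) \<and> m + Arg (v / w) < b"
  proof -
    have "- e < Arg (v / w)" "Arg (v / w) < e" using ar by linarith+
    then show ?thesis unfolding m_def e_def by (simp add: field_simps)
  qed
  ultimately show ?thesis using v(1) by (intro exI[of _ "m + Arg (v / w)"]) simp
qed

lemma ext_R:
  fixes D :: "real set" and G :: "real \<Rightarrow> real"
  assumes dense: "\<And>a b. a < b \<Longrightarrow> \<exists>s\<in>D. a < s \<and> s < b"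
    and mono: "\<And>s t. s \<in> D \<Longrightarrow> t \<in> D \<Longrightarrow> s < t \<Longrightarrow> G s < G t"
    and imd: "\<And>a b. a < b \<Longrightarrow> \<exists>s\<in>D. a < G s \<and> G s < b"
    and per: "\<And>s. s \<in> D \<Longrightarrow> s + 2 * pi \<in> D \<and> s - 2 * pi \<in> D"
    and sh: "\<And>s. s \<in> D \<Longrightarrow> G (s + 2 * pi) = G s + 2 * pi"
  obtains F where "continuous_on UNIV F" "\<And>s t. s < t \<Longrightarrow> F s < F t"
    "\<And>t. F (t + 2 * pi) = F t + 2 * pi" "\<And>s. s \<in> D \<Longrightarrow> F s = G s"
proof -
  define F where "F t = Sup (G ` {s\<in>D. s \<le> t})" for t
  have ne: "G ` {s\<in>D. s \<le> t} \<noteq> {}" for t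
  proof -
    obtain s where "s \<in> D" "t - 1 < s" "s < t" using dense[of "t - 1" t] by auto
    then show ?thesis by auto
  qed
  have bdd: "bdd_above (G ` {s\<in>D. s \<le> t})" for t
  proof -
    obtain s1 where s1: "s1 \<in> D" "t < s1" "s1 < t + 1" using dense[of t "t + 1"] by auto
    have "\<forall>x\<in>G ` {s\<in>D. s \<le> t}. x \<le> G s1" using mono s1 by fastforce
    then show ?thesis by (intro bdd_aboveI[where M="G s1"]) auto
  qed
  have up: "G s \<le> F t" if "s \<in> D" "s \<le> t" for s t
    unfolding F_def using that bdd by (intro cSup_upper) auto
  have least: "F t \<le> G s" if "s \<in> D" "t \<le> s" for s t
    unfolding F_def
  proof (rule cSup_least[OF ne])
    fix x assume "x \<in> G ` {s \<in> D. s \<le> t}"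
    then obtain s' where "s' \<in> D" "s' \<le> t" "x = G s'" by auto
    then show "x \<le> G s" using mono[of s' s] that by (cases "s' = s") auto
  qed
  have eq: "F s = G s" if "s \<in> D" for s using up[OF that] least[OF that] by (simp add: antisym)
  have strict: "F s < F t" if st: "s < t" for s t
  proof -
    obtain s1 where s1: "s1 \<in> D" "s < s1" "s1 < t" using dense[OF st] by auto
    obtain s2 where s2: "s2 \<in> D" "s1 < s2" "s2 < t" using dense[OF s1(3)] by auto
    have "F s \<le> G s1" using least s1 by auto
    also have "\<dots> < G s2" using mono s1 s2 by auto
    also have "\<dots> \<le> F t" using up s2 by auto
    finally show ?thesis .
  qed
  have cont: "continuous (at t) F" for t
    unfolding continuous_at_eps_delta
  proof (intro allI impI)
    fix e :: real assume e: "e > 0"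
    obtain s1 where s1: "s1 \<in> D" "F t - e < G s1" "G s1 < F t" using imd[of "F t - e" "F t"] e by auto
    obtain s2 where s2: "s2 \<in> D" "F t < G s2" "G s2 < F t + e" using imd[of "F t" "F t + e"] e by auto
    have "s1 < t"
    proof (rule ccontr)
      assume "\<not> s1 < t" then have "F t \<le> G s1" using least s1 by auto
      then show False using s1 by auto
    qed
    have "t < s2"
    proof (rule ccontr)
      assume "\<not> t < s2" then have "G s2 \<le> F t" using up s2 by auto
      then show False using s2 by auto
    qed
    show "\<exists>d>0. \<forall>x'. dist x' t < d \<longrightarrow> dist (F x') (F t) < e"
    proof (intro exI[of _ "min (t - s1) (s2 - t)"] conjI allI impI)
      show "0 < min (t - s1) (s2 - t)" using \<open>s1 < t\<close> \<open>t < s2\<close> by auto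
      fix x' assume "dist x' t < min (t - s1) (s2 - t)"
      then have "s1 < x'" "x' < s2" by (auto simp: dist_real_def)
      then have "G s1 \<le> F x'" "F x' \<le> G s2" using up least s1 s2 by auto
      then show "dist (F x') (F t) < e" using s1 s2 by (auto simp: dist_real_def)
    qed
  qed
  have shift: "F (t + 2 * pi) = F t + 2 * pi" for t
  proof (rule antisym)
    show "F (t + 2 * pi) \<le> F t + 2 * pi"
      unfolding F_def[of "t + 2 * pi"]
    proof (rule cSup_least[OF ne])
      fix x assume "x \<in> G ` {s \<in> D. s \<le> t + 2 * pi}"
      then obtain s where s: "s \<in> D" "s \<le> t + 2 * pi" "x = G s" by auto
      have "s - 2 * pi \<in> D" using per s by auto
      then have "G (s - 2 * pi) \<le> F t" using up s by auto
      moreover have "G s = G (s - 2 * pi) + 2 * pi" using sh[OF \<open>s - 2 * pi \<in> D\<close>] by simp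
      ultimately show "x \<le> F t + 2 * pi" using s by simp
    qed
    have "F t \<le> F (t + 2 * pi) - 2 * pi"
      unfolding F_def[of t]
    proof (rule cSup_least[OF ne])
      fix x assume "x \<in> G ` {s \<in> D. s \<le> t}"
      then obtain s where s: "s \<in> D" "s \<le> t" "x = G s" by auto
      have "s + 2 * pi \<in> D" using per s by auto
      then have "G (s + 2 * pi) \<le> F (t + 2 * pi)" using up s by auto
      then show "x \<le> F (t + 2 * pi) - 2 * pi" using sh[OF s(1)] s by simp
    qed
    then show "F t + 2 * pi \<le> F (t + 2 * pi)" by simp
  qed
  show ?thesis
    by (rule that[of F]) (use cont strict shift eq in \<open>auto intro: continuous_at_imp_continuous_on\<close>)
qed

lemma F_int:
  fixes F :: "real \<Rightarrow> real"
  assumes sh: "\<And>t. F (t + 2 * pi) = F t + 2 * pi"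
  shows "F (t + 2 * pi * of_int n) = F t + 2 * pi * of_int n"
proof -
  have nat: "F (t + 2 * pi * real m) = F t + 2 * pi * real m" for t m
  proof (induction m)
    case 0 then show ?case by simp
  next
    case (Suc m)
    have "F (t + 2 * pi * real (Suc m)) = F ((t + 2 * pi * real m) + 2 * pi)" by (simp add: algebra_simps)
    also have "\<dots> = F t + 2 * pi * real m + 2 * pi" using sh Suc by simp
    finally show ?case by (simp add: algebra_simps)
  qed
  show ?thesis
  proof (cases "n \<ge> 0")
    case True
    then have e: "real_of_int n = real (nat n)" by simp
    show ?thesis unfolding e by (rule nat)
  next
    case False
    then have m: "real_of_int n = - real (nat (- n))" by simp
    define X where "X = 2 * pi * real (nat (- n))"
    have "F ((t - X) + X) = F (t - X) + X" unfolding X_def by (rule nat)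
    then have "F (t - X) = F t - X" by simp
    then show ?thesis unfolding m X_def by simp
  qed
qed

lemma circle_from_F:
  fixes F :: "real \<Rightarrow> real"
  assumes cont: "continuous_on UNIV F" and mono: "\<And>s t. s < t \<Longrightarrow> F s < F t"
    and sh: "\<And>t. F (t + 2 * pi) = F t + 2 * pi"
  shows "\<exists>g. circle_homeo g \<and> (\<forall>t. g (cis t) = cis (F t))"
proof -
  define H where "H t = cis (F t)" for t
  have Hc: "continuous_on UNIV H" unfolding H_def by (intro continuous_intros cont)
  have Hint: "H (t + 2 * pi * of_int n) = H t" for t n
    unfolding H_def using F_int[of F, OF sh] by (simp add: cis_shift_int)
  define g where "g z = H (Arg2pi z)" for z
  have z1: "z = cis (Arg2pi z)" if "z \<in> S1" for z
    using theta_prop(1)[of 1 z] that unfolding theta_def by simp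
  have gcis: "g (cis t) = H t" for t
  proof -
    have "cis (Arg2pi (cis t)) = cis t" using z1[of "cis t"] by simp
    then obtain n :: int where "Arg2pi (cis t) = t + 2 * pi * n" using cis_eq_iff_int by blast
    then show ?thesis unfolding g_def using Hint by simp
  qed
  have gArg: "g z = H (Arg z)" if "z \<in> S1" for z
  proof -
    have "z \<noteq> 0" using that by auto
    then have "cis (Arg z) = sgn z" by (rule cis_Arg)
    also have "\<dots> = z" using that by (simp add: sgn_div_norm)
    finally show ?thesis using gcis[of "Arg z"] by simp
  qed
  have gc: "continuous_on S1 g"
    unfolding continuous_on_eq_continuous_within
  proof
    fix z assume z: "z \<in> S1"
    show "continuous (at z within S1) g"
    proof (cases "z = 1")
      case False
      have "z \<notin> \<real>\<^sub>\<ge>\<^sub>0"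
      proof
        assume "z \<in> \<real>\<^sub>\<ge>\<^sub>0"
        then have "Im z = 0" "Re z \<ge> 0" using complex_nonneg_Reals_iff by auto
        then have "z = 1" using z by (metis cmod_eq_Re complex_eqI abs_of_nonneg one_complex.simps mem_sphere_0)
        then show False using False by simp
      qed
      then have a: "continuous (at z) Arg2pi" by (rule continuous_at_Arg2pi)
      have b: "continuous (at (Arg2pi z)) H" using Hc by (simp add: continuous_on_eq_continuous_at)
      have "continuous (at z) (H \<circ> Arg2pi)" using continuous_at_compose[OF a b] .
      then have "continuous (at z) g" unfolding g_def o_def .
      then show ?thesis by (rule continuous_at_imp_continuous_within)
    next
      case True
      have a: "continuous (at z) Arg" using True by (intro continuous_at_Arg) auto
      have b: "continuous (at (Arg z)) H" using Hc by (simp add: continuous_on_eq_continuous_at)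
      have "continuous (at z) (H \<circ> Arg)" using continuous_at_compose[OF a b] .
      then have "continuous (at z within S1) (H \<circ> Arg)" by (rule continuous_at_imp_continuous_within)
      then show ?thesis
        by (rule continuous_transform_within[of _ _ _ 1]) (use z gArg in auto)
    qed
  qed
  have inj: "inj_on g S1"
  proof
    fix x y assume x: "x \<in> S1" and y: "y \<in> S1" and e: "g x = g y"
    define a where "a = Arg2pi x"
    define b where "b = Arg2pi y"
    have ab: "0 \<le> a" "a < 2 * pi" "0 \<le> b" "b < 2 * pi" unfolding a_def b_def using Arg2pi by auto
    have "cis (F a) = cis (F b)" using e unfolding g_def H_def a_def b_def .
    then obtain n :: int where n: "F a = F b + 2 * pi * n" using cis_eq_iff_int by blast
    then have "F a = F (b + 2 * pi * n)" using F_int[of F, OF sh] by simp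
    then have "a = b + 2 * pi * n" using mono by (metis linorder_neqE_linordered_idom order_less_irrefl)
    then have "n = 0" using ab int_small_zero[of n] by auto
    then have "a = b" using \<open>a = b + 2 * pi * n\<close> by simp
    then show "x = y" using z1[OF x] z1[OF y] unfolding a_def b_def by metis
  qed
  have surj: "g ` S1 = S1"
  proof
    show "g ` S1 \<subseteq> S1" unfolding g_def H_def by auto
    show "S1 \<subseteq> g ` S1"
    proof
      fix w assume w: "w \<in> S1"
      obtain u where u: "F 0 \<le> u" "u < F 0 + 2 * pi" "w = cis u" using lift_window[OF w] by blast
      have "F 0 \<le> u" "u \<le> F (2 * pi)" using u sh[of 0] by auto
      then obtain t where t: "0 \<le> t" "t \<le> 2 * pi" "F t = u"
        using IVT'[of F 0 u "2 * pi"] continuous_on_subset[OF cont] by auto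
      then have "g (cis t) = w" using gcis u unfolding H_def by simp
      then show "w \<in> g ` S1" by (metis cis_in_S1 imageI)
    qed
  qed
  obtain g' where "homeomorphism S1 S1 g g'"
    using homeomorphism_compact[OF compact_sphere gc surj inj] by blast
  then have "circle_homeo g" unfolding circle_homeo_def by blast
  then show ?thesis using gcis unfolding H_def by blast
qed

lemma LIFT:
  fixes D :: "real set" and G :: "real \<Rightarrow> real"
  assumes dense: "\<And>a b. a < b \<Longrightarrow> \<exists>s\<in>D. a < s \<and> s < b"
    and mono: "\<And>s t. s \<in> D \<Longrightarrow> t \<in> D \<Longrightarrow> s < t \<Longrightarrow> G s < G t"
    and imd: "\<And>a b. a < b \<Longrightarrow> \<exists>s\<in>D. a < G s \<and> G s < b"
    and per: "\<And>s. s \<in> D \<Longrightarrow> s + 2 * pi \<in> D \<and> s - 2 * pi \<in> D"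
    and sh: "\<And>s. s \<in> D \<Longrightarrow> G (s + 2 * pi) = G s + 2 * pi"
  shows "\<exists>g. circle_homeo g \<and> (\<forall>s\<in>D. g (cis s) = cis (G s))"
proof -
  obtain F where F: "continuous_on UNIV F" "\<And>s t. s < t \<Longrightarrow> F s < F t"
    "\<And>t. F (t + 2 * pi) = F t + 2 * pi" "\<And>s. s \<in> D \<Longrightarrow> F s = G s"
    using ext_R[OF assms] by blast
  obtain g where "circle_homeo g" "\<forall>t. g (cis t) = cis (F t)"
    using circle_from_F[OF F(1-3)] by blast
  then show ?thesis using F(4) by auto
qed

lemma cis_minus_int [simp]: "cis (t - 2 * pi * of_int n) = cis t"
  using cis_shift_int[of t "- n"] by simp

lemma cis_plus_int [simp]: "cis (t + 2 * pi * of_int n) = cis t"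
  by (rule cis_shift_int)

lemma PTS:
  assumes U: "U \<subseteq> S1" "S1 \<subseteq> closure U"
    and V: "f ` U \<subseteq> S1" "S1 \<subseteq> closure (f ` U)"
    and inj: "inj_on f U"
    and pres: "\<And>x y z. x \<in> U \<Longrightarrow> y \<in> U \<Longrightarrow> z \<in> U \<Longrightarrow> ccw x y z \<Longrightarrow> ccw (f x) (f y) (f z)"
  shows "\<exists>g. circle_homeo g \<and> (\<forall>z\<in>U. g z = f z)"
proof -
  obtain al where al: "cis al \<in> U" using dense_lift[OF U(2), of 0 1] U(1) by auto
  define z0 where "z0 = cis al"
  define w0 where "w0 = f z0"
  have w0S: "w0 \<in> S1" using V(1) al unfolding w0_def z0_def by auto
  obtain be where be: "w0 = cis be" using S1_cis[OF w0S] by blast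
  define D where "D = {s. cis s \<in> U}"
  define k where "k s = floor ((s - al) / (2 * pi))" for s
  define L where "L s = be + theta w0 (f (cis s))" for s
  define G where "G s = L s + 2 * pi * of_int (k s)" for s
  have fS: "f (cis s) \<in> S1" if "s \<in> D" for s using that V(1) unfolding D_def by auto
  have Lb: "be \<le> L s" "L s < be + 2 * pi" if "s \<in> D" for s
    using theta_prop[OF w0S fS[OF that]] unfolding L_def by auto
  have cisL: "cis (L s) = f (cis s)" if "s \<in> D" for s
    using theta_cis[OF be fS[OF that]] unfolding L_def by simp
  have kk: "real_of_int (k s) * (2 * pi) \<le> s - al" "s - al < (real_of_int (k s) + 1) * (2 * pi)" for s
  proof -
    have "real_of_int (k s) \<le> (s - al) / (2 * pi)" "(s - al) / (2 * pi) < real_of_int (k s) + 1"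
      unfolding k_def by linarith+
    then show "real_of_int (k s) * (2 * pi) \<le> s - al" "s - al < (real_of_int (k s) + 1) * (2 * pi)"
      by (simp_all add: field_simps)
  qed
  have kmono: "k s \<le> k t" if "s \<le> t" for s t
    unfolding k_def using that by (intro floor_mono divide_right_mono) auto
  have kshift: "k (s + 2 * pi * of_int m) = k s + m" for s m
  proof -
    have "(s + 2 * pi * of_int m - al) / (2 * pi) = (s - al) / (2 * pi) + of_int m"
      by (simp add: field_simps)
    then show ?thesis unfolding k_def by simp
  qed
  have Lshift: "L (s + 2 * pi * of_int m) = L s" for s m
    unfolding L_def by (simp add: cis_shift_int)
  have Dshift: "s + 2 * pi * of_int m \<in> D \<longleftrightarrow> s \<in> D" for s m
    unfolding D_def by (simp add: cis_shift_int)
  have Gshift: "G (s + 2 * pi * of_int m) = G s + 2 * pi * of_int m" for s m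
    unfolding G_def kshift Lshift by (simp add: algebra_simps)
  have cisG: "cis (G s) = f (cis s)" if "s \<in> D" for s
    unfolding G_def using cisL[OF that] by (simp add: cis_shift_int)
  define th where "th s = s - al - 2 * pi * of_int (k s)" for s
  have th: "0 \<le> th s" "th s < 2 * pi" "cis s = cis (al + th s)" for s
  proof -
    show "0 \<le> th s" "th s < 2 * pi" unfolding th_def using kk[of s] by (auto simp: algebra_simps)
    have "cis (al + th s) = cis (s + 2 * pi * of_int (- k s))" unfolding th_def by (simp add: algebra_simps)
    then show "cis s = cis (al + th s)" by (simp add: cis_shift_int)
  qed
  have dense: "\<exists>s\<in>D. a < s \<and> s < b" if ab: "a < b" for a b
    using dense_lift[OF U(2) ab U(1)] unfolding D_def by auto
  have mono: "G s < G t" if st: "s \<in> D" "t \<in> D" "s < t" for s t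
  proof (cases "k s < k t")
    case True
    then have "real_of_int (k s) + 1 \<le> real_of_int (k t)" by linarith
    then have "2 * pi * (real_of_int (k s) + 1) \<le> 2 * pi * real_of_int (k t)" by simp
    then show ?thesis unfolding G_def using Lb[OF st(1)] Lb[OF st(2)] by (simp add: algebra_simps)
  next
    case False
    then have keq: "k s = k t" using kmono[of s t] st by auto
    then have thlt: "th s < th t" unfolding th_def using st by simp
    have ct: "cis t \<noteq> z0"
    proof
      assume "cis t = z0"
      then have "cis (al + th t) = cis al" using th(3)[of t] unfolding z0_def by simp
      then have "al + th t = al" using th[of t] by (intro window_eq[of _ _ al]) auto
      then show False using thlt th(1)[of s] by simp
    qed
    show ?thesis
    proof (cases "th s = 0")
      case True
      then have "cis s = z0" using th(3)[of s] unfolding z0_def by simp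
      then have Ls: "L s = be" unfolding L_def using theta_zero_iff[OF w0S w0S] w0_def by simp
      have "cis t \<in> U" "z0 \<in> U" using st(2) al unfolding D_def z0_def by auto
      then have "f (cis t) \<noteq> w0" using ct inj unfolding w0_def inj_on_def by metis
      then have "theta w0 (f (cis t)) \<noteq> 0" using theta_zero_iff[OF w0S fS[OF st(2)]] by simp
      then have "be < L t" using theta_prop(2)[OF w0S fS[OF st(2)]] unfolding L_def by simp
      then show ?thesis unfolding G_def using Ls keq by simp
    next
      case False
      have "ccw (cis al) (cis (al + th s)) (cis (al + th t))"
        using th[of s] th[of t] thlt False
        by (subst ccw_win_nd[of al]) (auto simp: r3_def)
      then have "ccw z0 (cis s) (cis t)" using th(3) unfolding z0_def by simp
      moreover have "cis s \<in> U" "cis t \<in> U" "z0 \<in> U" using st al unfolding D_def z0_def by auto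
      ultimately have c: "ccw w0 (f (cis s)) (f (cis t))" using pres unfolding w0_def by blast
      have "f (cis s) \<noteq> w0" "f (cis t) \<noteq> w0" using ccw_distinct[OF c] by auto
      then have "theta w0 (f (cis s)) < theta w0 (f (cis t))"
        using c ccw_theta[OF w0S fS[OF st(1)] fS[OF st(2)]] by blast
      then show ?thesis unfolding G_def L_def using keq by simp
    qed
  qed
  have imd: "\<exists>s\<in>D. a < G s \<and> G s < b" if ab: "a < b" for a b
  proof -
    obtain tau where tau: "a < tau" "tau < b" "cis tau \<in> f ` U"
      using dense_lift[OF V(2) ab V(1)] by auto
    then obtain u where u: "u \<in> U" "cis tau = f u" by auto
    obtain s where s: "u = cis s" using S1_cis U(1) u(1) by blast
    have sD: "s \<in> D" using u s unfolding D_def by auto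
    have "cis (G s) = cis tau" using cisG[OF sD] u s by simp
    then obtain n :: int where n: "G s = tau + 2 * pi * n" using cis_eq_iff_int by blast
    have "s + 2 * pi * of_int (- n) \<in> D" using Dshift sD by blast
    moreover have "G (s + 2 * pi * of_int (- n)) = tau" using Gshift[of s "- n"] n by simp
    ultimately show ?thesis using tau by metis
  qed
  have per: "s + 2 * pi \<in> D \<and> s - 2 * pi \<in> D" if "s \<in> D" for s
    using that unfolding D_def by simp
  have sh: "G (s + 2 * pi) = G s + 2 * pi" for s
    using Gshift[of s 1] by simp
  obtain g where g: "circle_homeo g" "\<forall>s\<in>D. g (cis s) = cis (G s)"
    using LIFT[of D G] dense mono imd per sh by blast
  have "\<forall>z\<in>U. g z = f z"
  proof
    fix z assume z: "z \<in> U"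
    obtain s where s: "z = cis s" using S1_cis U(1) z by blast
    then have "s \<in> D" using z unfolding D_def by auto
    then show "g z = f z" using g(2) cisG s by auto
  qed
  then show ?thesis using g(1) by blast
qed

lemma Arg2pi_cis: "0 \<le> r \<Longrightarrow> r < 2 * pi \<Longrightarrow> Arg2pi (cis r) = r"
  using window_eq[of "Arg2pi (cis r)" r 0] theta_prop[of 1 "cis r"] unfolding theta_def by auto

lemma cis_Arg2pi: "z \<in> S1 \<Longrightarrow> cis (Arg2pi z) = z"
  using theta_prop(1)[of 1 z] unfolding theta_def by simp

lemma r3_mono:
  assumes "\<And>x y. x \<in> A \<Longrightarrow> y \<in> A \<Longrightarrow> x < y \<Longrightarrow> P x < P y" "a \<in> A" "b \<in> A" "c \<in> A" "r3 a b c"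
  shows "r3 (P a) (P b) (P c)"
  using assms unfolding r3_def by meson

definition bm :: "real \<Rightarrow> real \<Rightarrow> real \<Rightarrow> real \<Rightarrow> (real \<Rightarrow> real) \<Rightarrow> bool" where
  "bm a b c d P \<longleftrightarrow> (\<forall>r r'. a \<le> r \<longrightarrow> r < r' \<longrightarrow> r' < b \<longrightarrow> P r < P r') \<and>
     (\<forall>r. a \<le> r \<longrightarrow> r < b \<longrightarrow> c \<le> P r \<and> P r < d) \<and>
     (\<forall>y. c \<le> y \<longrightarrow> y < d \<longrightarrow> (\<exists>r. a \<le> r \<and> r < b \<and> P r = y))"

definition lin :: "real \<Rightarrow> real \<Rightarrow> real \<Rightarrow> real \<Rightarrow> real \<Rightarrow> real" where
  "lin a b c d t = c + (t - a) * ((d - c) / (b - a))"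

lemma lin_start [simp]: "lin a b c d a = c"
  unfolding lin_def by simp

lemma bm_lin:
  assumes "a < b" "c < d"
  shows "bm a b c d (lin a b c d)"
proof -
  have k: "(d - c) / (b - a) > 0" using assms by simp
  have m: "lin a b c d r < lin a b c d r'" if "r < r'" for r r'
  proof -
    have "(r - a) * ((d - c) / (b - a)) < (r' - a) * ((d - c) / (b - a))"
      using k that by (intro mult_strict_right_mono) auto
    then show ?thesis unfolding lin_def by linarith
  qed
  have r: "c \<le> lin a b c d r \<and> lin a b c d r < d" if "a \<le> r" "r < b" for r
  proof -
    have "0 \<le> (r - a) * ((d - c) / (b - a))" using k that by (intro mult_nonneg_nonneg) auto
    then have "c \<le> lin a b c d r" unfolding lin_def by linarith
    moreover have "(r - a) * ((d - c) / (b - a)) < (b - a) * ((d - c) / (b - a))"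
      using that k by (intro mult_strict_right_mono) auto
    moreover have "(b - a) * ((d - c) / (b - a)) = d - c" using assms by simp
    ultimately show ?thesis unfolding lin_def by linarith
  qed
  have s: "\<exists>r. a \<le> r \<and> r < b \<and> lin a b c d r = y" if "c \<le> y" "y < d" for y
  proof (intro exI conjI)
    let ?r = "a + (y - c) * ((b - a) / (d - c))"
    have k2: "(b - a) / (d - c) > 0" using assms by simp
    have "0 \<le> (y - c) * ((b - a) / (d - c))" using k2 that by (intro mult_nonneg_nonneg) auto
    then show "a \<le> ?r" by linarith
    have "(y - c) * ((b - a) / (d - c)) < (d - c) * ((b - a) / (d - c))"
      using that k2 by (intro mult_strict_right_mono) auto
    moreover have "(d - c) * ((b - a) / (d - c)) = b - a" using assms by simp
    ultimately show "?r < b" by linarith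
    have "((b - a) / (d - c)) * ((d - c) / (b - a)) = 1" using assms by simp
    then have "(y - c) * ((b - a) / (d - c)) * ((d - c) / (b - a)) = y - c"
      by (metis mult.assoc mult.right_neutral)
    then show "lin a b c d ?r = y" unfolding lin_def by simp
  qed
  show ?thesis unfolding bm_def using m r s by blast
qed

lemma bmD1: "bm a b c d P \<Longrightarrow> a \<le> r \<Longrightarrow> r < r' \<Longrightarrow> r' < b \<Longrightarrow> P r < P r'"
  unfolding bm_def by blast
lemma bmD2: "bm a b c d P \<Longrightarrow> a \<le> r \<Longrightarrow> r < b \<Longrightarrow> c \<le> P r \<and> P r < d"
  unfolding bm_def by blast
lemma bmD3: "bm a b c d P \<Longrightarrow> c \<le> y \<Longrightarrow> y < d \<Longrightarrow> (\<exists>r. a \<le> r \<and> r < b \<and> P r = y)"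
  unfolding bm_def by blast

lemma bm_glue:
  assumes b1: "bm a m c e P1" and b2: "bm m b e d P2" and am: "a < m" and mb: "m < b"
  shows "bm a b c d (\<lambda>r. if r < m then P1 r else P2 r)"
proof -
  note A1 = bmD1[OF b1] and A2 = bmD2[OF b1] and A3 = bmD3[OF b1]
  note B1 = bmD1[OF b2] and B2 = bmD2[OF b2] and B3 = bmD3[OF b2]
  have ce: "c < e" using A2[of a] am by linarith
  have ed: "e < d" using B2[of m] mb by linarith
  let ?Q = "\<lambda>r. if r < m then P1 r else P2 r"
  have 1: "?Q r < ?Q r'" if "a \<le> r" "r < r'" "r' < b" for r r'
  proof (cases "r' < m")
    case True then show ?thesis using A1[of r r'] that by auto
  next
    case False
    show ?thesis
    proof (cases "r < m")
      case True
      have "P1 r < e" using A2[of r] that True by auto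
      moreover have "e \<le> P2 r'" using B2[of r'] that False by auto
      ultimately show ?thesis using True False by auto
    next
      case False2: False then show ?thesis using False B1[of r r'] that by auto
    qed
  qed
  have 2: "c \<le> ?Q r \<and> ?Q r < d" if "a \<le> r" "r < b" for r
  proof (cases "r < m")
    case True then show ?thesis using A2[of r] that ed by auto
  next
    case False then show ?thesis using B2[of r] that ce by auto
  qed
  have 3: "\<exists>r. a \<le> r \<and> r < b \<and> ?Q r = y" if yy: "c \<le> y" "y < d" for y
  proof (cases "y < e")
    case True
    then obtain r where "a \<le> r" "r < m" "P1 r = y" using A3[of y] yy by blast
    then show ?thesis using mb by (intro exI[of _ r]) auto
  next
    case False
    then obtain r where "m \<le> r" "r < b" "P2 r = y" using B3[of y] yy by auto
    then show ?thesis using am by (intro exI[of _ r]) auto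
  qed
  show ?thesis unfolding bm_def using 1 2 3 by blast
qed

lemma i_pows [simp]: "\<i> ^ 2 = -1" "\<i> ^ 3 = - \<i>" "\<i> ^ 4 = 1"
proof -
  show "\<i> ^ 2 = -1" by simp
  have "\<i> ^ 3 = \<i> ^ 2 * \<i>" by (simp add: power3_eq_cube power2_eq_square)
  then show "\<i> ^ 3 = - \<i>" by simp
  have "\<i> ^ 4 = \<i> ^ 2 * \<i> ^ 2" by (metis numeral_Bit0 power_add)
  then show "\<i> ^ 4 = 1" by simp
qed

lemma cis_3pi2: "cis (3 * pi / 2) = - \<i>"
proof -
  have "cis pi * cis (pi / 2) = cis (pi + pi / 2)" by (rule cis_mult)
  moreover have "pi + pi / 2 = 3 * pi / 2" by simp
  ultimately have "cis (3 * pi / 2) = cis pi * cis (pi / 2)" by simp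
  then show ?thesis by simp
qed

lemma cis_2pi: "cis (2 * pi) = 1"
  using cis_plus_2pi[of 0] by simp

lemma PTS_mono:
  assumes bmP: "bm 0 (2 * pi) c (c + 2 * pi) P"
  shows "\<exists>g. circle_homeo g \<and> (\<forall>r. 0 \<le> r \<longrightarrow> r < 2 * pi \<longrightarrow> g (cis r) = cis (P r))"
proof -
  note P1 = bmD1[OF bmP] and P2 = bmD2[OF bmP] and P3 = bmD3[OF bmP]
  define f where "f z = cis (P (Arg2pi z))" for z
  have A: "0 \<le> Arg2pi z" "Arg2pi z < 2 * pi" for z using Arg2pi by auto
  have sur: "S1 \<subseteq> f ` S1"
  proof
    fix w assume w: "w \<in> S1"
    obtain y where y: "c \<le> y" "y < c + 2 * pi" "w = cis y" using lift_window[OF w] by blast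
    obtain r where r: "0 \<le> r" "r < 2 * pi" "P r = y" using P3[OF y(1,2)] by blast
    have "f (cis r) = w" unfolding f_def using Arg2pi_cis[OF r(1,2)] r y by simp
    then show "w \<in> f ` S1" by (metis cis_in_S1 imageI)
  qed
  have inj: "inj_on f S1"
  proof
    fix x y assume x: "x \<in> S1" and y: "y \<in> S1" and e: "f x = f y"
    have "P (Arg2pi x) = P (Arg2pi y)"
      using e unfolding f_def using P2[OF A(1) A(2), of x] P2[OF A(1) A(2), of y]
      by (intro window_eq[of _ _ c]) auto
    then have "Arg2pi x = Arg2pi y" using P1 A by (metis linorder_neqE_linordered_idom order_less_irrefl)
    then show "x = y" using cis_Arg2pi x y by metis
  qed
  have pres: "ccw (f x) (f y) (f z)" if "x \<in> S1" "y \<in> S1" "z \<in> S1" "ccw x y z" for x y z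
  proof -
    have "ccw (cis (Arg2pi x)) (cis (Arg2pi y)) (cis (Arg2pi z))" using that cis_Arg2pi by simp
    then have "r3 (Arg2pi x) (Arg2pi y) (Arg2pi z)" using A by (subst (asm) ccw_win_nd[of 0]) auto
    moreover have mP: "\<And>u v. u \<in> {0..<2*pi} \<Longrightarrow> v \<in> {0..<2*pi} \<Longrightarrow> u < v \<Longrightarrow> P u < P v"
      using P1 by auto
    ultimately have "r3 (P (Arg2pi x)) (P (Arg2pi y)) (P (Arg2pi z))"
      using r3_mono[of "{0..<2*pi}" P "Arg2pi x" "Arg2pi y" "Arg2pi z", OF mP] A by auto
    then show ?thesis unfolding f_def using P2 A by (subst ccw_win_nd[of c]) auto
  qed
  have "\<exists>g. circle_homeo g \<and> (\<forall>z\<in>S1. g z = f z)"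
  proof (rule PTS)
    show "S1 \<subseteq> S1" "S1 \<subseteq> closure S1" using closure_subset by auto
    show "f ` S1 \<subseteq> S1" unfolding f_def by auto
    show "S1 \<subseteq> closure (f ` S1)" using sur closure_subset by blast
  qed (use inj pres in auto)
  then obtain g where g: "circle_homeo g" "\<forall>z\<in>S1. g z = f z" by blast
  have "g (cis r) = cis (P r)" if "0 \<le> r" "r < 2 * pi" for r
    using g(2) Arg2pi_cis[OF that] unfolding f_def by auto
  then show ?thesis using g(1) by blast
qed

lemma PL4:
  assumes "y0 < y1" "y1 < y2" "y2 < y3" "y3 < y0 + 2 * pi"
  shows "\<exists>g. circle_homeo g \<and> g 1 = cis y0 \<and> g \<i> = cis y1 \<and> g (-1) = cis y2 \<and> g (- \<i>) = cis y3"
proof -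
  define L4 where "L4 = lin (3 * pi / 2) (2 * pi) y3 (y0 + 2 * pi)"
  define L3 where "L3 = lin pi (3 * pi / 2) y2 y3"
  define L2 where "L2 = lin (pi / 2) pi y1 y2"
  define L1 where "L1 = lin 0 (pi / 2) y0 y1"
  define Q3 where "Q3 r = (if r < 3 * pi / 2 then L3 r else L4 r)" for r
  define Q2 where "Q2 r = (if r < pi then L2 r else Q3 r)" for r
  define Q1 where "Q1 r = (if r < pi / 2 then L1 r else Q2 r)" for r
  have pi: "0 < pi" by simp
  have b4: "bm (3 * pi / 2) (2 * pi) y3 (y0 + 2 * pi) L4" unfolding L4_def using assms pi by (intro bm_lin) auto
  have b3: "bm pi (3 * pi / 2) y2 y3 L3" unfolding L3_def using assms pi by (intro bm_lin) auto
  have b2: "bm (pi / 2) pi y1 y2 L2" unfolding L2_def using assms pi by (intro bm_lin) auto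
  have b1: "bm 0 (pi / 2) y0 y1 L1" unfolding L1_def using assms pi by (intro bm_lin) auto
  have c3: "bm pi (2 * pi) y2 (y0 + 2 * pi) Q3"
    unfolding Q3_def[abs_def] using pi by (intro bm_glue[OF b3 b4]) auto
  have c2: "bm (pi / 2) (2 * pi) y1 (y0 + 2 * pi) Q2"
    unfolding Q2_def[abs_def] using pi by (intro bm_glue[OF b2 c3]) auto
  have c1: "bm 0 (2 * pi) y0 (y0 + 2 * pi) Q1"
    unfolding Q1_def[abs_def] using pi by (intro bm_glue[OF b1 c2]) auto
  obtain g where g: "circle_homeo g" "\<And>r. 0 \<le> r \<Longrightarrow> r < 2 * pi \<Longrightarrow> g (cis r) = cis (Q1 r)"
    using PTS_mono[OF c1] by blast
  have "Q1 0 = y0" unfolding Q1_def L1_def by simp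
  moreover have "Q1 (pi / 2) = y1" unfolding Q1_def Q2_def L2_def using pi by simp
  moreover have "Q1 pi = y2" unfolding Q1_def Q2_def Q3_def L3_def using pi by simp
  moreover have "Q1 (3 * pi / 2) = y3" unfolding Q1_def Q2_def Q3_def L4_def using pi by simp
  moreover have "g 1 = cis (Q1 0)" using g(2)[of 0] by simp
  moreover have "g \<i> = cis (Q1 (pi / 2))" using g(2)[of "pi / 2"] by simp
  moreover have "g (-1) = cis (Q1 pi)" using g(2)[of pi] by simp
  moreover have "g (- \<i>) = cis (Q1 (3 * pi / 2))" using g(2)[of "3 * pi / 2"] cis_3pi2 by simp
  ultimately show ?thesis using g(1) by auto
qed

lemma ccw_cnj: "ccw a b c \<Longrightarrow> ccw (cnj a) (cnj c) (cnj b)"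
  unfolding ccw_def
  apply clarify
  subgoal for s t u
    by (rule exI[of _ "- s - 2 * pi"], rule exI[of _ "- u"], rule exI[of _ "- t"])
      (auto simp: cis_cnj)
  done

lemma circle_homeo_cnj: "circle_homeo cnj"
  unfolding circle_homeo_def
proof (intro exI[of _ cnj])
  have "cnj ` S1 = S1"
  proof
    show "cnj ` S1 \<subseteq> S1" by auto
    show "S1 \<subseteq> cnj ` S1" by (auto intro!: image_eqI[of _ cnj "cnj _"])
  qed
  then show "homeomorphism S1 S1 cnj cnj" unfolding homeomorphism_def by auto
qed

lemma circle_homeo_comp: "circle_homeo g \<Longrightarrow> circle_homeo h \<Longrightarrow> circle_homeo (h \<circ> g)"
  unfolding circle_homeo_def using homeomorphism_compose by blast

lemma fwd_case:
  assumes "ccw x1 x2 x3" "ccw x1 x3 x4"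
  shows "\<exists>g. circle_homeo g \<and> g \<i> = x1 \<and> g (-1) = x2 \<and> g (- \<i>) = x3 \<and> g 1 = x4"
proof -
  obtain s1 where s1: "x1 = cis s1" using S1_cis ccw_S1[OF assms(1)] by blast
  obtain t2 t3 where a: "x2 = cis t2" "x3 = cis t3" "s1 < t2" "t2 < t3" "t3 < s1 + 2 * pi"
    using ccw_base[OF assms(1) s1] by blast
  obtain t3' t4 where b: "x3 = cis t3'" "x4 = cis t4" "s1 < t3'" "t3' < t4" "t4 < s1 + 2 * pi"
    using ccw_base[OF assms(2) s1] by blast
  have "t3 = t3'" using window_eq[of t3 t3' s1] a b by auto
  then obtain g where g: "circle_homeo g" "g 1 = cis (t4 - 2 * pi)" "g \<i> = cis s1" "g (-1) = cis t2" "g (- \<i>) = cis t3"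
    using PL4[of "t4 - 2 * pi" s1 t2 t3] a b by auto
  then show ?thesis using s1 a b by auto
qed

lemma char_bwd:
  assumes "cyc4a x1 x2 x3 x4"
  shows "cyc4 x1 x2 x3 x4"
proof -
  have d: "distinct [x1, x2, x3, x4]" "x1 \<in> S1" "x2 \<in> S1" "x3 \<in> S1" "x4 \<in> S1"
    using cyc4a_distinct[OF assms] by auto
  have "\<exists>g. circle_homeo g \<and> g \<i> = x1 \<and> g (-1) = x2 \<and> g (- \<i>) = x3 \<and> g 1 = x4"
  proof (cases "ccw x1 x2 x3 \<and> ccw x1 x3 x4")
    case True then show ?thesis using fwd_case by blast
  next
    case False
    then have c: "ccw x1 x4 x3" "ccw x1 x3 x2" using assms unfolding cyc4a_def by auto
    have "ccw (cnj x1) (cnj x2) (cnj x3)" "ccw (cnj x1) (cnj x3) (cnj x4)"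
      using ccw_cnj[OF c(2)] ccw_cnj[OF c(1)] by auto
    then obtain g where g: "circle_homeo g" "g \<i> = cnj x1" "g (-1) = cnj x2" "g (- \<i>) = cnj x3" "g 1 = cnj x4"
      using fwd_case by blast
    have "circle_homeo (cnj \<circ> g)" using circle_homeo_comp[OF g(1) circle_homeo_cnj] .
    then show ?thesis using g by (intro exI[of _ "cnj \<circ> g"]) auto
  qed
  then show ?thesis unfolding cyc4_def using d by auto
qed

lemma sep_std: "sepP \<i> (- \<i>) (-1) 1"
proof -
  have "ccw \<i> (-1) (- \<i>)" unfolding ccw_def
    by (rule exI[of _ "pi / 2"], rule exI[of _ pi], rule exI[of _ "3 * pi / 2"]) (auto simp: cis_3pi2)
  moreover have "ccw \<i> (- \<i>) 1" unfolding ccw_def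
    by (rule exI[of _ "pi / 2"], rule exI[of _ "3 * pi / 2"], rule exI[of _ "2 * pi"]) (auto simp: cis_3pi2 cis_2pi)
  ultimately show ?thesis unfolding sepP_def cyc4a_def by blast
qed

lemma char_fwd:
  assumes "cyc4 x1 x2 x3 x4"
  shows "cyc4a x1 x2 x3 x4"
proof (rule ccontr)
  assume nc: "\<not> cyc4a x1 x2 x3 x4"
  have S: "x1 \<in> S1" "x2 \<in> S1" "x3 \<in> S1" "x4 \<in> S1" and dd: "distinct [x1, x2, x3, x4]"
    using assms unfolding cyc4_def by auto
  obtain g where g: "circle_homeo g" "g \<i> = x1" "g (-1) = x2" "g (- \<i>) = x3" "g 1 = x4"
    using assms unfolding cyc4_def by auto
  obtain g' where h: "homeomorphism S1 S1 g g'" using g(1) unfolding circle_homeo_def by blast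
  have gg: "\<And>z. z \<in> S1 \<Longrightarrow> g' (g z) = z" "\<And>z. z \<in> S1 \<Longrightarrow> g (g' z) = z" "g' ` S1 = S1"
    "continuous_on S1 g'" using h unfolding homeomorphism_def by auto
  obtain s1 where s1: "x1 = cis s1" using S1_cis S(1) by blast
  have "x2 \<noteq> cis s1" using dd s1 by auto
  then obtain t2 where t2: "s1 < t2" "t2 < s1 + 2 * pi" "x2 = cis t2" using lift_window_open[OF S(2)] by blast
  have "x3 \<noteq> cis s1" using dd s1 by auto
  then obtain t3 where t3: "s1 < t3" "t3 < s1 + 2 * pi" "x3 = cis t3" using lift_window_open[OF S(3)] by blast
  have "x4 \<noteq> cis s1" using dd s1 by auto
  then obtain t4 where t4: "s1 < t4" "t4 < s1 + 2 * pi" "x4 = cis t4" using lift_window_open[OF S(4)] by blast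
  have ne: "t2 \<noteq> t3" "t3 \<noteq> t4" "t2 \<noteq> t4" using dd t2 t3 t4 by auto
  have e1: "ccw x1 x2 x3 \<longleftrightarrow> t2 < t3" unfolding s1 t2(3) t3(3) using t2 t3
    by (subst ccw_win_nd[of s1]) (auto simp: r3_def)
  have e2: "ccw x1 x3 x4 \<longleftrightarrow> t3 < t4" unfolding s1 t3(3) t4(3) using t3 t4
    by (subst ccw_win_nd[of s1]) (auto simp: r3_def)
  have e3: "ccw x1 x4 x3 \<longleftrightarrow> t4 < t3" unfolding s1 t3(3) t4(3) using t3 t4
    by (subst ccw_win_nd[of s1]) (auto simp: r3_def)
  have e4: "ccw x1 x3 x2 \<longleftrightarrow> t3 < t2" unfolding s1 t2(3) t3(3) using t2 t3
    by (subst ccw_win_nd[of s1]) (auto simp: r3_def)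
  have out: "t3 < min t2 t4 \<or> max t2 t4 < t3" using nc e1 e2 e3 e4 ne unfolding cyc4a_def by auto
  define Gam where "Gam = cis ` {min t2 t4 .. max t2 t4}"
  have cG: "connected Gam" unfolding Gam_def
    by (intro connected_continuous_image continuous_intros) auto
  have x24: "x2 \<in> Gam" "x4 \<in> Gam" unfolding Gam_def using t2 t4 by auto
  have GS: "Gam \<subseteq> S1 - {x1, x3}"
  proof
    fix y assume "y \<in> Gam"
    then obtain t where t: "min t2 t4 \<le> t" "t \<le> max t2 t4" "y = cis t" unfolding Gam_def by auto
    have tw: "s1 < t" "t < s1 + 2 * pi" using t(1,2) t2(1,2) t4(1,2) by linarith+
    have "y \<noteq> x1"
    proof
      assume "y = x1"
      then have "cis t = cis s1" using t(3) s1 by simp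
      then have "t = s1" using window_eq[of t s1 s1] tw by linarith
      then show False using t t2 t4 by auto
    qed
    moreover have "y \<noteq> x3"
    proof
      assume "y = x3"
      then have "cis t = cis t3" using t(3) t3(3) by simp
      then have "t = t3" using window_eq[of t t3 s1] tw t3(1,2) by linarith
      then show False using t out by auto
    qed
    ultimately show "y \<in> S1 - {x1, x3}" using t by auto
  qed
  define C where "C = g' ` Gam"
  have cC: "connected C" unfolding C_def
    using GS by (intro connected_continuous_image[OF _ cG] continuous_on_subset[OF gg(4)]) auto
  have CS: "C \<subseteq> S1 - {\<i>, - \<i>}"
  proof
    fix z assume "z \<in> C"
    then obtain y where y: "y \<in> Gam" "z = g' y" unfolding C_def by auto
    have yS: "y \<in> S1" using y GS by auto
    have "z \<in> S1" using y yS gg(3) by auto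
    moreover have "z \<noteq> \<i>" using y yS gg(2) g(2) GS by force
    moreover have "z \<noteq> - \<i>" using y yS gg(2) g(4) GS by force
    ultimately show "z \<in> S1 - {\<i>, - \<i>}" by auto
  qed
  have "-1 \<in> C" unfolding C_def using x24 gg(1)[of "-1"] g(3) by force
  moreover have "1 \<in> C" unfolding C_def using x24 gg(1)[of 1] g(5) by force
  ultimately have "\<not> sepP \<i> (- \<i>) (-1) 1" using NC[OF cC CS] by auto
  then show False using sep_std by blast
qed

lemma char: "cyc4 x1 x2 x3 x4 \<longleftrightarrow> cyc4a x1 x2 x3 x4"
  using char_fwd char_bwd by blast

lemma cyc4a_liftw:
  assumes "w \<le> a" "a < w + 2 * pi" "w \<le> b" "b < w + 2 * pi" "w \<le> c" "c < w + 2 * pi" "w \<le> d" "d < w + 2 * pi"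
  shows "cyc4a (cis a) (cis b) (cis c) (cis d) \<longleftrightarrow> c4r a b c d"
  unfolding cyc4a_def c4r_def using assms by (simp add: ccw_win_nd[of w])

lemma c4r_between:
  assumes "s1 < t2" "s1 < t3" "s1 < t4" "c4r s1 t2 t3 t4" "min t3 t4 < t" "t < max t3 t4"
  shows "\<not> c4r t t2 t3 t4" "\<not> c4r s1 t t3 t4"
  using assms unfolding c4r_def r3_def by smt+

lemma connected_singleton_or_arc:
  assumes "is_singleton J \<or> open_arc J"
  shows "connected J"
proof (cases "is_singleton J")
  case True then show ?thesis by (auto simp: is_singleton_def)
next
  case False
  then obtain a b where "J = cis ` {a<..<b}" using assms unfolding open_arc_def by blast
  then show ?thesis by (auto intro!: connected_continuous_image continuous_intros)
qed

lemma conn_between: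
  assumes S: "J1 \<subseteq> S1" "J2 \<subseteq> S1" "J3 \<subseteq> S1" "J4 \<subseteq> S1"
    and c: "connected J3" "connected J4"
    and sc: "set_cyc4 J1 J2 J3 J4"
  shows "\<exists>T. connected T \<and> J3 \<union> J4 \<subseteq> T \<and> T \<subseteq> S1 - (J1 \<union> J2)"
proof -
  have ne: "J1 \<noteq> {}" "J2 \<noteq> {}" "J3 \<noteq> {}" "J4 \<noteq> {}" and pd: "pairwise disjnt {J1, J2, J3, J4}"
    and ds: "distinct [J1, J2, J3, J4]" and cy: "\<forall>x1\<in>J1. \<forall>x2\<in>J2. \<forall>x3\<in>J3. \<forall>x4\<in>J4. cyc4 x1 x2 x3 x4"
    using sc unfolding set_cyc4_def by auto
  have dj: "J1 \<inter> J3 = {}" "J2 \<inter> J3 = {}" "J1 \<inter> J4 = {}" "J2 \<inter> J4 = {}"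
    using pd ds unfolding pairwise_def disjnt_def by auto
  obtain x1 x2 x3 x4 where x: "x1 \<in> J1" "x2 \<in> J2" "x3 \<in> J3" "x4 \<in> J4" using ne by blast
  have xS: "x1 \<in> S1" "x2 \<in> S1" "x3 \<in> S1" "x4 \<in> S1" using x S by auto
  have cx: "cyc4a x1 x2 x3 x4" using cy x char by blast
  then have dx: "distinct [x1, x2, x3, x4]" using cyc4a_distinct by blast
  obtain s1 where s1: "x1 = cis s1" using S1_cis xS by blast
  have "x2 \<noteq> cis s1" using dx s1 by auto
  then obtain t2 where t2: "s1 < t2" "t2 < s1 + 2 * pi" "x2 = cis t2" using lift_window_open[OF xS(2)] by blast
  have "x3 \<noteq> cis s1" using dx s1 by auto
  then obtain t3 where t3: "s1 < t3" "t3 < s1 + 2 * pi" "x3 = cis t3" using lift_window_open[OF xS(3)] by blast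
  have "x4 \<noteq> cis s1" using dx s1 by auto
  then obtain t4 where t4: "s1 < t4" "t4 < s1 + 2 * pi" "x4 = cis t4" using lift_window_open[OF xS(4)] by blast
  have c4: "c4r s1 t2 t3 t4" using cx unfolding s1 t2(3) t3(3) t4(3)
    using cyc4a_liftw[of s1 s1 t2 t3 t4] t2 t3 t4 by auto
  define Gam where "Gam = cis ` {min t3 t4 .. max t3 t4}"
  have cG: "connected Gam" unfolding Gam_def
    by (intro connected_continuous_image continuous_intros) auto
  have x34: "x3 \<in> Gam" "x4 \<in> Gam" unfolding Gam_def using t3 t4 by auto
  have GS: "Gam \<subseteq> S1" unfolding Gam_def by auto
  have avoid: "y \<notin> Gam" if y: "y \<in> J1 \<union> J2" for y
  proof
    assume "y \<in> Gam"
    then obtain t where t: "min t3 t4 \<le> t" "t \<le> max t3 t4" "y = cis t" unfolding Gam_def by auto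
    have tw: "s1 < t" "t < s1 + 2 * pi" using t(1,2) t3(1,2) t4(1,2) by linarith+
    have "y \<noteq> x3" "y \<noteq> x4" using y x dj by auto
    then have "t \<noteq> t3" "t \<noteq> t4" using t t3 t4 by auto
    then have tin: "min t3 t4 < t" "t < max t3 t4" using t by linarith+
    have nc: "\<not> c4r t t2 t3 t4" "\<not> c4r s1 t t3 t4" using c4r_between[OF t2(1) t3(1) t4(1) c4 tin] by auto
    show False
    proof (cases "y \<in> J1")
      case True
      then have "cyc4a y x2 x3 x4" using cy x char by blast
      then have "c4r t t2 t3 t4" unfolding t(3) t2(3) t3(3) t4(3)
        using cyc4a_liftw[of s1 t t2 t3 t4] tw t2 t3 t4 by auto
      then show False using nc by auto
    next
      case False
      then have "y \<in> J2" using y by auto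
      then have "cyc4a x1 y x3 x4" using cy x char by blast
      then have "c4r s1 t t3 t4" unfolding s1 t(3) t3(3) t4(3)
        using cyc4a_liftw[of s1 s1 t t3 t4] tw t3 t4 by auto
      then show False using nc by auto
    qed
  qed
  define T where "T = J3 \<union> Gam \<union> J4"
  have "connected (J3 \<union> Gam)" using connected_Un[OF c(1) cG] x(3) x34(1) by auto
  then have cT: "connected T" unfolding T_def using connected_Un[OF _ c(2), of "J3 \<union> Gam"] x(4) x34(2) by auto
  have "T \<subseteq> S1 - (J1 \<union> J2)" unfolding T_def using S GS avoid dj by auto
  then show ?thesis using cT unfolding T_def by blast
qed

lemma FWD:
  assumes conA: "\<forall>J\<in>A. connected J \<and> J \<subseteq> S1"
    and g: "circle_homeo g" "\<forall>J\<in>A. g ` J = h J"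
    and J: "J1 \<in> A" "J2 \<in> A" "J3 \<in> A" "J4 \<in> A" "set_cyc4 J1 J2 J3 J4"
  shows "\<exists>C\<in>components (S1 - (h J1 \<union> h J2)). h J3 \<subseteq> C \<and> h J4 \<subseteq> C"
proof -
  obtain T where T: "connected T" "J3 \<union> J4 \<subseteq> T" "T \<subseteq> S1 - (J1 \<union> J2)"
    using conn_between[OF _ _ _ _ _ _ J(5)] conA J(1-4) by meson
  obtain g' where hm: "homeomorphism S1 S1 g g'" using g(1) unfolding circle_homeo_def by blast
  have gc: "continuous_on S1 g" "\<And>z. z \<in> S1 \<Longrightarrow> g' (g z) = z" "g ` S1 = S1"
    using hm unfolding homeomorphism_def by auto
  have cgT: "connected (g ` T)" using T(1,3) by (intro connected_continuous_image continuous_on_subset[OF gc(1)]) auto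
  have sub: "g ` T \<subseteq> S1 - (h J1 \<union> h J2)"
  proof
    fix w assume "w \<in> g ` T"
    then obtain t where t: "t \<in> T" "w = g t" by auto
    have tS: "t \<in> S1" using t T by auto
    have "w \<in> S1" using t tS gc(3) by auto
    moreover have "w \<notin> h J1 \<union> h J2"
    proof
      assume "w \<in> h J1 \<union> h J2"
      then obtain y where y: "y \<in> J1 \<union> J2" "w = g y" using g(2) J by auto
      have "J1 \<subseteq> S1" "J2 \<subseteq> S1" using conA J by auto
      then have "y \<in> S1" using y by auto
      then have "y = t" using gc(2) y t tS by metis
      then show False using y t T by auto
    qed
    ultimately show "w \<in> S1 - (h J1 \<union> h J2)" by auto
  qed
  have ne: "S1 - (h J1 \<union> h J2) \<noteq> {}"
  proof -
    have "J3 \<noteq> {}" using J(5) unfolding set_cyc4_def by auto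
    then show ?thesis using sub T(2) by auto
  qed
  obtain C where C: "C \<in> components (S1 - (h J1 \<union> h J2))" "g ` T \<subseteq> C"
    using exists_component_superset[OF sub ne cgT] by blast
  have "h J3 = g ` J3" "h J4 = g ` J4" using g(2) J by auto
  moreover have "g ` J3 \<subseteq> C" "g ` J4 \<subseteq> C" using C(2) T(2) by blast+
  ultimately have "h J3 \<subseteq> C" "h J4 \<subseteq> C" by simp_all
  then show ?thesis using C(1) by blast
qed

definition arcrep :: "complex set \<Rightarrow> real \<times> real" where
  "arcrep J = (SOME p. fst p < snd p \<and> snd p - fst p < 2 * pi \<and> J = cis ` {fst p<..<snd p})"

definition aL :: "complex set \<Rightarrow> real" where "aL J = fst (arcrep J)"
definition aR :: "complex set \<Rightarrow> real" where "aR J = snd (arcrep J)"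

lemma arcrep:
  assumes "open_arc J"
  shows "aL J < aR J" "aR J - aL J < 2 * pi" "J = cis ` {aL J<..<aR J}"
proof -
  obtain a b where "a < b \<and> b - a < 2 * pi \<and> J = cis ` {a<..<b}" using assms unfolding open_arc_def by blast
  then have "\<exists>p. fst p < snd p \<and> snd p - fst p < 2 * pi \<and> J = cis ` {fst p<..<snd p}"
    by (intro exI[of _ "(a, b)"]) auto
  then have "fst (arcrep J) < snd (arcrep J) \<and> snd (arcrep J) - fst (arcrep J) < 2 * pi \<and> J = cis ` {fst (arcrep J)<..<snd (arcrep J)}"
    unfolding arcrep_def by (rule someI_ex)
  then show "aL J < aR J" "aR J - aL J < 2 * pi" "J = cis ` {aL J<..<aR J}" unfolding aL_def aR_def by auto
qed

definition par :: "complex set \<Rightarrow> complex \<Rightarrow> real" where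
  "par J z = (THE t. aL J < t \<and> t < aR J \<and> cis t = z)"

lemma par_uniq:
  assumes "open_arc J" "aL J < s" "s < aR J" "aL J < t" "t < aR J" "cis s = cis t"
  shows "s = t"
  using window_eq[of s t "aL J"] arcrep[OF assms(1)] assms by auto

lemma par:
  assumes "open_arc J" "z \<in> J"
  shows "aL J < par J z" "par J z < aR J" "cis (par J z) = z"
proof -
  have "z \<in> cis ` {aL J<..<aR J}" using arcrep(3)[OF assms(1)] assms(2) by simp
  then obtain t where t: "aL J < t" "t < aR J" "cis t = z" by auto
  have "aL J < par J z \<and> par J z < aR J \<and> cis (par J z) = z"
    unfolding par_def
  proof (rule theI[of _ t])
    show "aL J < t \<and> t < aR J \<and> cis t = z" using t by auto
    fix s assume "aL J < s \<and> s < aR J \<and> cis s = z"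
    then show "s = t" using par_uniq[OF assms(1)] t by auto
  qed
  then show "aL J < par J z" "par J z < aR J" "cis (par J z) = z" by auto
qed

lemma par_cis:
  assumes "open_arc J" "aL J < t" "t < aR J"
  shows "par J (cis t) = t"
proof -
  have "cis t \<in> cis ` {aL J<..<aR J}" using assms by auto
  then have z: "cis t \<in> J" using arcrep(3)[OF assms(1)] by simp
  show ?thesis using par[OF assms(1) z] par_uniq[OF assms(1) _ _ assms(2,3)] by auto
qed

lemma arc_S1: "open_arc J \<Longrightarrow> J \<subseteq> S1"
  by (metis arcrep(3) cis_in_S1 image_subsetI)

lemma arc_TWO:
  assumes J: "open_arc J" and xy: "x \<in> J" "y \<in> J" and z: "z \<in> S1" "z \<notin> J"
  shows "ccw x y z \<longleftrightarrow> par J x < par J y"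
proof -
  define a where "a = aL J"
  define b where "b = aR J"
  have ab: "a < b" "b - a < 2 * pi" "J = cis ` {a<..<b}" using arcrep[OF J] unfolding a_def b_def by auto
  define tx where "tx = par J x"
  define ty where "ty = par J y"
  have tx: "a < tx" "tx < b" "cis tx = x" using par[OF J xy(1)] unfolding a_def b_def tx_def by auto
  have ty: "a < ty" "ty < b" "cis ty = y" using par[OF J xy(2)] unfolding a_def b_def ty_def by auto
  obtain u where u: "a \<le> u" "u < a + 2 * pi" "z = cis u" using lift_window[OF z(1)] by blast
  define u' where "u' = (if u = a then a + 2 * pi else u)"
  have u': "a < u'" "u' \<le> a + 2 * pi" "z = cis u'" using u unfolding u'_def by auto
  have "\<not> (a < u' \<and> u' < b)" using z(2) u'(3) ab(3) by auto
  then have bu: "b \<le> u'" using u' by linarith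
  define w where "w = min tx ty"
  have "ccw (cis tx) (cis ty) (cis u') \<longleftrightarrow> r3 tx ty u'"
    by (rule ccw_win_nd[of w]) (use tx ty u' bu ab in \<open>auto simp: w_def\<close>)
  also have "\<dots> \<longleftrightarrow> tx < ty" unfolding r3_def using tx ty bu by auto
  finally show ?thesis using tx ty u' unfolding tx_def ty_def by simp
qed

lemma arc_THREE:
  assumes J: "open_arc J" and xyz: "x \<in> J" "y \<in> J" "z \<in> J"
  shows "ccw x y z \<longleftrightarrow> r3 (par J x) (par J y) (par J z)"
proof -
  have ab: "aL J < aR J" "aR J - aL J < 2 * pi" using arcrep[OF J] by auto
  have "ccw (cis (par J x)) (cis (par J y)) (cis (par J z)) \<longleftrightarrow> r3 (par J x) (par J y) (par J z)"
    by (rule ccw_win_nd[of "aL J"]) (use par[OF J xyz(1)] par[OF J xyz(2)] par[OF J xyz(3)] ab in auto)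
  then show ?thesis using par(3)[OF J] xyz by simp
qed

lemma lin_arc:
  assumes "a < b" "c < d" "a < t" "t < b"
  shows "c < lin a b c d t" "lin a b c d t < d"
proof -
  have bm: "bm a b c d (lin a b c d)" using bm_lin assms by auto
  have "lin a b c d a < lin a b c d t" using bmD1[OF bm, of a t] assms by auto
  then show "c < lin a b c d t" by simp
  show "lin a b c d t < d" using bmD2[OF bm, of t] assms by auto
qed

lemma lin_surj:
  assumes "a < b" "c < d" "c < u" "u < d"
  shows "\<exists>t. a < t \<and> t < b \<and> lin a b c d t = u"
proof -
  have bm: "bm a b c d (lin a b c d)" using bm_lin assms by auto
  obtain t where t: "a \<le> t" "t < b" "lin a b c d t = u" using bmD3[OF bm, of u] assms by auto
  have "t \<noteq> a" using t assms by auto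
  then show ?thesis using t by (intro exI[of _ t]) auto
qed

lemma lin_mono: "a < b \<Longrightarrow> c < d \<Longrightarrow> s < t \<Longrightarrow> lin a b c d s < lin a b c d t"
proof -
  assume "a < b" "c < d" "s < t"
  then have k: "(d - c) / (b - a) > 0" by simp
  have "(s - a) * ((d - c) / (b - a)) < (t - a) * ((d - c) / (b - a))"
    using k \<open>s < t\<close> by (intro mult_strict_right_mono) auto
  then show ?thesis unfolding lin_def by linarith
qed

lemma r3_lin:
  assumes "a < b" "c < d" "r3 s t u"
  shows "r3 (lin a b c d s) (lin a b c d t) (lin a b c d u)"
  using assms(3) lin_mono[OF assms(1,2)] unfolding r3_def by meson

lemma CONS:
  fixes A B :: "complex set set" and h :: "complex set \<Rightarrow> complex set"
  assumes subA: "\<forall>J\<in>A. J \<noteq> {} \<and> J \<subseteq> S1" and disjA: "pairwise disjnt A"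
    and denseA: "closure (\<Union>A) = S1" and shapeA: "\<forall>J\<in>A. is_singleton J \<or> open_arc J"
    and subB: "\<forall>J\<in>B. J \<noteq> {} \<and> J \<subseteq> S1" and disjB: "pairwise disjnt B"
    and denseB: "closure (\<Union>B) = S1" and shapeB: "\<forall>J\<in>B. is_singleton J \<or> open_arc J"
    and bij: "bij_betw h A B"
    and sing: "\<forall>J\<in>A. is_singleton (h J) \<longleftrightarrow> is_singleton J"
    and pres: "\<And>J1 J2 J3 x1 x2 x3 y1 y2 y3. J1 \<in> A \<Longrightarrow> J2 \<in> A \<Longrightarrow> J3 \<in> A \<Longrightarrow> distinct [J1, J2, J3] \<Longrightarrow>
       x1 \<in> J1 \<Longrightarrow> x2 \<in> J2 \<Longrightarrow> x3 \<in> J3 \<Longrightarrow> y1 \<in> h J1 \<Longrightarrow> y2 \<in> h J2 \<Longrightarrow> y3 \<in> h J3 \<Longrightarrow>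
       ccw x1 x2 x3 \<Longrightarrow> ccw y1 y2 y3"
  shows "\<exists>g. circle_homeo g \<and> (\<forall>J\<in>A. g ` J = h J)"
proof -
  have hB: "J \<in> A \<Longrightarrow> h J \<in> B" for J using bij unfolding bij_betw_def by auto
  have hinj: "J \<in> A \<Longrightarrow> K \<in> A \<Longrightarrow> h J = h K \<Longrightarrow> J = K" for J K
    using bij unfolding bij_betw_def inj_on_def by auto
  have hsurj: "h ` A = B" using bij unfolding bij_betw_def by auto
  have arcA: "open_arc J" if "J \<in> A" "\<not> is_singleton J" for J using shapeA that by auto
  have arcB: "open_arc (h J)" if "J \<in> A" "\<not> is_singleton J" for J
    using shapeB hB[OF that(1)] sing that by auto
  define U where "U = \<Union>A"
  define phi where "phi J z = (if is_singleton J then the_elem (h J)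
      else cis (lin (aL J) (aR J) (aL (h J)) (aR (h J)) (par J z)))" for J z
  define pc where "pc z = (THE J. J \<in> A \<and> z \<in> J)" for z
  define f where "f z = phi (pc z) z" for z
  have pcJ: "pc z = J" if "J \<in> A" "z \<in> J" for J z
    unfolding pc_def
  proof (rule the_equality)
    show "J \<in> A \<and> z \<in> J" using that by auto
    fix K assume "K \<in> A \<and> z \<in> K"
    then show "K = J" using disjA that unfolding pairwise_def disjnt_def by blast
  qed
  have fJ: "f z = phi J z" if "J \<in> A" "z \<in> J" for J z unfolding f_def using pcJ[OF that] by simp
  have disjB': "X \<inter> Y = {}" if "X \<in> B" "Y \<in> B" "X \<noteq> Y" for X Y
    using disjB that unfolding pairwise_def disjnt_def by auto
  have farc: "f (cis t) = cis (lin (aL J) (aR J) (aL (h J)) (aR (h J)) t)"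
    if "J \<in> A" "\<not> is_singleton J" "aL J < t" "t < aR J" for J t
  proof -
    have "cis t \<in> cis ` {aL J<..<aR J}" using that by auto
    then have "cis t \<in> J" using arcrep(3)[OF arcA[OF that(1,2)]] by simp
    then show ?thesis using fJ[OF that(1)] par_cis[OF arcA[OF that(1,2)] that(3,4)] that(2) unfolding phi_def by simp
  qed
  have parf: "par (h J) (f z) = lin (aL J) (aR J) (aL (h J)) (aR (h J)) (par J z)"
    "aL J < par J z" "par J z < aR J"
    if "J \<in> A" "\<not> is_singleton J" "z \<in> J" for J z
  proof -
    note aJ = arcA[OF that(1,2)] and ahJ = arcB[OF that(1,2)]
    have p: "aL J < par J z" "par J z < aR J" "cis (par J z) = z" using par[OF aJ that(3)] by auto
    then show "aL J < par J z" "par J z < aR J" by auto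
    have "f z = cis (lin (aL J) (aR J) (aL (h J)) (aR (h J)) (par J z))"
      using farc[OF that(1,2) p(1,2)] p(3) by simp
    moreover have "aL (h J) < lin (aL J) (aR J) (aL (h J)) (aR (h J)) (par J z)"
      "lin (aL J) (aR J) (aL (h J)) (aR (h J)) (par J z) < aR (h J)"
      using lin_arc[OF arcrep(1)[OF aJ] arcrep(1)[OF ahJ] p(1,2)] by auto
    ultimately show "par (h J) (f z) = lin (aL J) (aR J) (aL (h J)) (aR (h J)) (par J z)"
      using par_cis[OF ahJ] by simp
  qed
  have fimg: "f ` J = h J" if "J \<in> A" for J
  proof (cases "is_singleton J")
    case True
    then obtain p where p: "J = {p}" unfolding is_singleton_def by auto
    have "is_singleton (h J)" using sing that True by auto
    then obtain q where q: "h J = {q}" unfolding is_singleton_def by auto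
    have "f p = q" using fJ[OF that] p q True unfolding phi_def by simp
    then show ?thesis using p q by simp
  next
    case False
    note aJ = arcA[OF that False] and ahJ = arcB[OF that False]
    note rJ = arcrep[OF aJ] and rh = arcrep[OF ahJ]
    show ?thesis
    proof
      show "f ` J \<subseteq> h J"
      proof
        fix w assume "w \<in> f ` J"
        then obtain z where z: "z \<in> J" "w = f z" by auto
        have p: "aL J < par J z" "par J z < aR J" "cis (par J z) = z" using par[OF aJ z(1)] by auto
        have "w = cis (lin (aL J) (aR J) (aL (h J)) (aR (h J)) (par J z))"
          using farc[OF that False p(1,2)] p(3) z by simp
        moreover have "lin (aL J) (aR J) (aL (h J)) (aR (h J)) (par J z) \<in> {aL (h J)<..<aR (h J)}"
          using lin_arc[OF rJ(1) rh(1) p(1,2)] by auto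
        ultimately have "w \<in> cis ` {aL (h J)<..<aR (h J)}" by auto
        then show "w \<in> h J" using rh(3) by simp
      qed
      show "h J \<subseteq> f ` J"
      proof
        fix w assume "w \<in> h J"
        then have "w \<in> cis ` {aL (h J)<..<aR (h J)}" using rh(3) by simp
        then obtain u where u: "aL (h J) < u" "u < aR (h J)" "w = cis u" by auto
        obtain t where t: "aL J < t" "t < aR J" "lin (aL J) (aR J) (aL (h J)) (aR (h J)) t = u"
          using lin_surj[OF rJ(1) rh(1) u(1,2)] by blast
        have "cis t \<in> cis ` {aL J<..<aR J}" using t by auto
        then have "cis t \<in> J" using rJ(3) by simp
        moreover have "f (cis t) = w" using farc[OF that False t(1,2)] t(3) u(3) by simp
        ultimately show "w \<in> f ` J" by force
      qed
    qed
  qed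
  have fmem: "f z \<in> h J" if "J \<in> A" "z \<in> J" for J z using fimg[OF that(1)] that by auto
  have finjJ: "inj_on f J" if "J \<in> A" for J
  proof (cases "is_singleton J")
    case True then show ?thesis unfolding is_singleton_def by auto
  next
    case False
    note aJ = arcA[OF that False] and ahJ = arcB[OF that False]
    note rJ = arcrep[OF aJ] and rh = arcrep[OF ahJ]
    show ?thesis
    proof
      fix x y assume xy: "x \<in> J" "y \<in> J" "f x = f y"
      have "lin (aL J) (aR J) (aL (h J)) (aR (h J)) (par J x) = lin (aL J) (aR J) (aL (h J)) (aR (h J)) (par J y)"
        using parf(1)[OF that False xy(1)] parf(1)[OF that False xy(2)] xy(3) by simp
      then have "par J x = par J y" using lin_mono[OF rJ(1) rh(1)]
        by (metis linorder_neqE_linordered_idom order_less_irrefl)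
      then show "x = y" using par(3)[OF aJ xy(1)] par(3)[OF aJ xy(2)] by metis
    qed
  qed
  have finj: "inj_on f U"
  proof
    fix x y assume x: "x \<in> U" and y: "y \<in> U" and e: "f x = f y"
    obtain Jx where Jx: "Jx \<in> A" "x \<in> Jx" using x unfolding U_def by auto
    obtain Jy where Jy: "Jy \<in> A" "y \<in> Jy" using y unfolding U_def by auto
    have "Jx = Jy"
    proof (rule ccontr)
      assume "Jx \<noteq> Jy"
      then have "h Jx \<noteq> h Jy" using hinj Jx Jy by auto
      then have "h Jx \<inter> h Jy = {}" using disjB' hB Jx Jy by auto
      then show False using fmem[OF Jx] fmem[OF Jy] e by auto
    qed
    then show "x = y" using finjJ[OF Jx(1)] Jx Jy e unfolding inj_on_def by auto
  qed
  have fU: "f ` U = \<Union>B"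
  proof -
    have "f ` U = (\<Union>J\<in>A. f ` J)" unfolding U_def by (rule image_Union)
    also have "\<dots> = (\<Union>J\<in>A. h J)" using fimg by simp
    also have "\<dots> = \<Union>B" using hsurj by simp
    finally show ?thesis .
  qed
  have US: "U \<subseteq> S1" unfolding U_def using subA by auto
  have pair_case: "ccw (f u) (f v) (f w)"
    if J: "J \<in> A" and uv: "u \<in> J" "v \<in> J" and w: "w \<in> U" "w \<notin> J" and c: "ccw u v w" for J u v w
  proof -
    have "u \<noteq> v" using ccw_distinct[OF c] by auto
    then have ns: "\<not> is_singleton J" using uv unfolding is_singleton_def by auto
    note aJ = arcA[OF J ns] and ahJ = arcB[OF J ns]
    note rJ = arcrep[OF aJ] and rh = arcrep[OF ahJ]
    obtain K where K: "K \<in> A" "w \<in> K" using w unfolding U_def by auto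
    have KJ: "K \<noteq> J" using K w by auto
    have fw: "f w \<in> S1" "f w \<notin> h J"
    proof -
      show "f w \<in> S1" using fmem[OF K] hB[OF K(1)] subB by blast
      have "h K \<inter> h J = {}" using disjB' hB K J hinj KJ by metis
      then show "f w \<notin> h J" using fmem[OF K] by auto
    qed
    have "par J u < par J v" using arc_TWO[OF aJ uv] c w US by auto
    then have "par (h J) (f u) < par (h J) (f v)"
      using parf[OF J ns uv(1)] parf[OF J ns uv(2)] lin_mono[OF rJ(1) rh(1)] by simp
    then show ?thesis using arc_TWO[OF ahJ fmem[OF J uv(1)] fmem[OF J uv(2)] fw] by simp
  qed
  have fpres: "ccw (f x) (f y) (f z)" if xyz: "x \<in> U" "y \<in> U" "z \<in> U" and c: "ccw x y z" for x y z
  proof -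
    obtain Jx where Jx: "Jx \<in> A" "x \<in> Jx" using xyz unfolding U_def by auto
    obtain Jy where Jy: "Jy \<in> A" "y \<in> Jy" using xyz unfolding U_def by auto
    obtain Jz where Jz: "Jz \<in> A" "z \<in> Jz" using xyz unfolding U_def by auto
    have notin: "a \<notin> K" if "K \<in> A" "L \<in> A" "a \<in> L" "K \<noteq> L" for a K L
      using disjA that unfolding pairwise_def disjnt_def by auto
    show ?thesis
    proof (cases "distinct [Jx, Jy, Jz]")
      case True
      show ?thesis using pres[OF Jx(1) Jy(1) Jz(1) True Jx(2) Jy(2) Jz(2) fmem[OF Jx] fmem[OF Jy] fmem[OF Jz] c] .
    next
      case False
      consider "Jx = Jy" "Jy = Jz" | "Jx = Jy" "Jy \<noteq> Jz" | "Jy = Jz" "Jx \<noteq> Jy" | "Jx = Jz" "Jx \<noteq> Jy"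
        using False by auto
      then show ?thesis
      proof cases
        case 1
        have "x \<noteq> y" using ccw_distinct[OF c] by auto
        then have ns: "\<not> is_singleton Jx" using Jx Jy 1 unfolding is_singleton_def by auto
        note aJ = arcA[OF Jx(1) ns] and ahJ = arcB[OF Jx(1) ns]
        note rJ = arcrep[OF aJ] and rh = arcrep[OF ahJ]
        have y': "y \<in> Jx" "z \<in> Jx" using Jy Jz 1 by auto
        have "r3 (par Jx x) (par Jx y) (par Jx z)" using arc_THREE[OF aJ Jx(2) y'] c by simp
        then have "r3 (par (h Jx) (f x)) (par (h Jx) (f y)) (par (h Jx) (f z))"
          using r3_lin[OF rJ(1) rh(1)]
            parf(1)[OF Jx(1) ns Jx(2)] parf(1)[OF Jx(1) ns y'(1)] parf(1)[OF Jx(1) ns y'(2)] by simp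
        then show ?thesis using arc_THREE[OF ahJ fmem[OF Jx] fmem[OF Jx(1) y'(1)] fmem[OF Jx(1) y'(2)]] by simp
      next
        case 2
        have "z \<notin> Jx" using notin[OF Jx(1) Jz] 2 by auto
        then show ?thesis using pair_case[OF Jx(1) Jx(2) _ xyz(3) _ c] Jy 2 by auto
      next
        case 3
        have "x \<notin> Jy" using notin[OF Jy(1) Jx] 3 by auto
        moreover have "ccw y z x" using ccw_cyclic[OF c] .
        ultimately have "ccw (f y) (f z) (f x)" using pair_case[OF Jy(1) Jy(2) _ xyz(1)] Jz 3 by auto
        then show ?thesis using ccw_cyclic by blast
      next
        case 4
        have "y \<notin> Jx" using notin[OF Jx(1) Jy] 4 by auto
        moreover have "ccw z x y" using ccw_cyclic[OF ccw_cyclic[OF c]] .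
        ultimately have "ccw (f z) (f x) (f y)" using pair_case[OF Jx(1) _ Jx(2) xyz(2)] Jz 4 by auto
        then show ?thesis using ccw_cyclic by blast
      qed
    qed
  qed
  have "\<exists>g. circle_homeo g \<and> (\<forall>z\<in>U. g z = f z)"
  proof (rule PTS)
    show "U \<subseteq> S1" by (rule US)
    show "S1 \<subseteq> closure U" using denseA unfolding U_def by simp
    show "f ` U \<subseteq> S1" using fU subB by auto
    show "S1 \<subseteq> closure (f ` U)" using fU denseB by simp
  qed (use finj fpres in auto)
  then obtain g where g: "circle_homeo g" "\<forall>z\<in>U. g z = f z" by blast
  have "g ` J = h J" if "J \<in> A" for J
  proof -
    have "g ` J = f ` J" using g(2) that unfolding U_def by (auto intro!: image_cong)
    then show ?thesis using fimg[OF that] by simp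
  qed
  then show ?thesis using g(1) by blast
qed

lemma SETVARY:
  assumes c: "connected J1" "connected J2" "connected J3"
    and S: "J1 \<subseteq> S1" "J2 \<subseteq> S1" "J3 \<subseteq> S1"
    and d: "J1 \<inter> J2 = {}" "J2 \<inter> J3 = {}" "J1 \<inter> J3 = {}"
    and x: "x1 \<in> J1" "x2 \<in> J2" "x3 \<in> J3" and y: "y1 \<in> J1" "y2 \<in> J2" "y3 \<in> J3"
    and cc: "ccw x1 x2 x3"
  shows "ccw y1 y2 y3"
proof -
  have xS: "x1 \<in> S1" "x2 \<in> S1" "x3 \<in> S1" "y1 \<in> S1" "y2 \<in> S1" "y3 \<in> S1" using S x y by auto
  have s1: "J1 \<subseteq> S1 - {x2, x3}" using S(1) d x by blast
  have "ccw y1 x2 x3" by (rule VARY[OF c(1) s1 x(1) y(1) xS(2) xS(3) cc])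
  then have c2: "ccw x2 x3 y1" using ccw_cyclic by blast
  have s2: "J2 \<subseteq> S1 - {x3, y1}" using S(2) d x y by blast
  have "ccw y2 x3 y1" by (rule VARY[OF c(2) s2 x(2) y(2) xS(3) xS(4) c2])
  then have c3: "ccw x3 y1 y2" using ccw_cyclic by blast
  have s3: "J3 \<subseteq> S1 - {y1, y2}" using S(3) d y by blast
  have "ccw y3 y1 y2" by (rule VARY[OF c(3) s3 x(3) y(3) xS(4) xS(5) c3])
  then show ?thesis using ccw_cyclic by blast
qed

lemma open_arc_cnj:
  assumes "open_arc J" shows "open_arc (cnj ` J)"
proof -
  obtain a b where ab: "a < b" "b - a < 2 * pi" "J = cis ` {a<..<b}" using assms unfolding open_arc_def by blast
  have "cnj ` J = cis ` {- b<..<- a}"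
  proof
    show "cnj ` J \<subseteq> cis ` {- b<..<- a}" using ab by (auto simp: cis_cnj)
    show "cis ` {- b<..<- a} \<subseteq> cnj ` J"
    proof
      fix w assume "w \<in> cis ` {- b<..<- a}"
      then obtain t where t: "- b < t" "t < - a" "w = cis t" by auto
      have "cis (- t) \<in> J" using ab t by auto
      moreover have "w = cnj (cis (- t))" using t by (simp add: cis_cnj)
      ultimately show "w \<in> cnj ` J" by blast
    qed
  qed
  then show ?thesis unfolding open_arc_def using ab by (intro exI[of _ "- b"] exI[of _ "- a"]) auto
qed

lemma cnj_img_cnj [simp]: "cnj ` cnj ` X = X"
  by (auto simp: image_image)

lemma CONV:
  fixes A :: "complex set set" and h :: "complex set \<Rightarrow> complex set"
  assumes sub: "\<forall>J\<in>A. J \<noteq> {} \<and> J \<subseteq> S1"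
    and disj: "pairwise disjnt A"
    and dense: "closure (\<Union>A) = S1"
    and shape: "\<forall>J\<in>A. is_singleton J \<or> open_arc J"
    and bij: "bij_betw h A A"
    and nonsing: "h ` {J\<in>A. \<not> is_singleton J} = {J\<in>A. \<not> is_singleton J}"
    and cond: "\<forall>J1\<in>A. \<forall>J2\<in>A. \<forall>J3\<in>A. \<forall>J4\<in>A. set_cyc4 J1 J2 J3 J4 \<longrightarrow>
       (\<exists>C\<in>components (S1 - (h J1 \<union> h J2)). h J3 \<subseteq> C \<and> h J4 \<subseteq> C)"
  shows "order_preserving A h"
proof -
  have hA: "J \<in> A \<Longrightarrow> h J \<in> A" for J using bij unfolding bij_betw_def by auto
  have hinj: "J \<in> A \<Longrightarrow> K \<in> A \<Longrightarrow> h J = h K \<Longrightarrow> J = K" for J K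
    using bij unfolding bij_betw_def inj_on_def by auto
  have hsurj: "h ` A = A" using bij unfolding bij_betw_def by auto
  have conn: "connected J" if "J \<in> A" for J using connected_singleton_or_arc shape that by auto
  have JS: "J \<subseteq> S1" if "J \<in> A" for J using sub that by auto
  have dj: "J \<inter> K = {}" if "J \<in> A" "K \<in> A" "J \<noteq> K" for J K
    using disj that unfolding pairwise_def disjnt_def by auto
  have sing: "is_singleton (h J) \<longleftrightarrow> is_singleton J" if J: "J \<in> A" for J
  proof
    assume s: "is_singleton (h J)"
    show "is_singleton J"
    proof (rule ccontr)
      assume "\<not> is_singleton J"
      then have "h J \<in> {J\<in>A. \<not> is_singleton J}" using nonsing J by blast
      then show False using s by auto
    qed
  next
    assume s: "is_singleton J"
    show "is_singleton (h J)"
    proof (rule ccontr)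
      assume ns: "\<not> is_singleton (h J)"
      then have "h J \<in> h ` {J\<in>A. \<not> is_singleton J}" using nonsing hA[OF J] by blast
      then obtain K where K: "K \<in> A" "\<not> is_singleton K" "h J = h K" by auto
      then have "J = K" using hinj J by auto
      then show False using s K by auto
    qed
  qed
  define rho where "rho J = (SOME x. x \<in> J)" for J :: "complex set"
  have rho: "rho J \<in> J" if "J \<in> A" for J using sub that unfolding rho_def by (metis some_in_eq)
  define psi where "psi J = rho (h J)" for J
  have psi: "psi J \<in> h J" if "J \<in> A" for J unfolding psi_def using rho hA that by auto
  have rS: "rho J \<in> S1" "psi J \<in> S1" if "J \<in> A" for J
    using rho[OF that] psi[OF that] JS[OF that] JS[OF hA[OF that]] by auto
  have rdist: "rho J \<noteq> rho K" "psi J \<noteq> psi K" if "J \<in> A" "K \<in> A" "J \<noteq> K" for J K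
  proof -
    have "rho J \<in> J" "rho K \<in> K" "J \<inter> K = {}" using rho[of J] rho[of K] dj[of J K] that by auto
    then show "rho J \<noteq> rho K" by auto
    have "h J \<noteq> h K" using hinj that by auto
    then have "psi J \<in> h J" "psi K \<in> h K" "h J \<inter> h K = {}" using psi[of J] psi[of K] dj[of "h J" "h K"] hA that by auto
    then show "psi J \<noteq> psi K" by auto
  qed
  have sv: "ccw y1 y2 y3" if J: "J1 \<in> A" "J2 \<in> A" "J3 \<in> A" "distinct [J1, J2, J3]"
    and xy: "x1 \<in> J1" "x2 \<in> J2" "x3 \<in> J3" "y1 \<in> J1" "y2 \<in> J2" "y3 \<in> J3" "ccw x1 x2 x3" for J1 J2 J3 x1 x2 x3 y1 y2 y3
  proof -
    have d: "J1 \<inter> J2 = {}" "J2 \<inter> J3 = {}" "J1 \<inter> J3 = {}" using dj J by auto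
    show ?thesis by (rule SETVARY[OF conn[OF J(1)] conn[OF J(2)] conn[OF J(3)] JS[OF J(1)] JS[OF J(2)] JS[OF J(3)] d xy])
  qed
  have s5: "\<not> sepP (psi J1) (psi J2) (psi J3) (psi J4)"
    if J: "J1 \<in> A" "J2 \<in> A" "J3 \<in> A" "J4 \<in> A" "distinct [J1, J2, J3, J4]"
      and cy: "cyc4a (rho J1) (rho J2) (rho J3) (rho J4)" for J1 J2 J3 J4
  proof -
    have all: "cyc4a x1 x2 x3 x4" if x: "x1 \<in> J1" "x2 \<in> J2" "x3 \<in> J3" "x4 \<in> J4" for x1 x2 x3 x4
    proof -
      have d3: "distinct [J1, J2, J3]" "distinct [J1, J3, J4]" "distinct [J1, J4, J3]" "distinct [J1, J3, J2]"
        using J(5) by auto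
      show ?thesis using cy unfolding cyc4a_def
        using sv[OF J(1,2,3) d3(1) rho[OF J(1)] rho[OF J(2)] rho[OF J(3)] x(1,2,3)]
          sv[OF J(1,3,4) d3(2) rho[OF J(1)] rho[OF J(3)] rho[OF J(4)] x(1,3,4)]
          sv[OF J(1,4,3) d3(3) rho[OF J(1)] rho[OF J(4)] rho[OF J(3)] x(1,4,3)]
          sv[OF J(1,3,2) d3(4) rho[OF J(1)] rho[OF J(3)] rho[OF J(2)] x(1,3,2)] by blast
    qed
    have "set_cyc4 J1 J2 J3 J4"
      unfolding set_cyc4_def
    proof (intro conjI)
      show "J1 \<noteq> {}" "J2 \<noteq> {}" "J3 \<noteq> {}" "J4 \<noteq> {}" using sub J by auto
      show "pairwise disjnt {J1, J2, J3, J4}" using pairwise_subset[OF disj] J by auto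
      show "distinct [J1, J2, J3, J4]" using J(5) .
      show "\<forall>x1\<in>J1. \<forall>x2\<in>J2. \<forall>x3\<in>J3. \<forall>x4\<in>J4. cyc4 x1 x2 x3 x4" using all char_bwd by blast
    qed
    then obtain C where C: "C \<in> components (S1 - (h J1 \<union> h J2))" "h J3 \<subseteq> C" "h J4 \<subseteq> C"
      using cond J by blast
    have cC: "connected C" using in_components_connected[OF C(1)] .
    have CS: "C \<subseteq> S1 - {psi J1, psi J2}" using in_components_subset[OF C(1)] psi J by blast
    show ?thesis using NC[OF cC CS, of "psi J3" "psi J4"] C psi J rS by blast
  qed
  have Q: "sepP (psi a) (psi b) (psi c) (psi d)"
    if J: "a \<in> A" "b \<in> A" "c \<in> A" "d \<in> A" "distinct [a, b, c, d]" and sp: "sepP (rho a) (rho b) (rho c) (rho d)"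
    for a b c d
  proof -
    have n1: "\<not> sepP (psi a) (psi c) (psi b) (psi d)"
      using s5[of a c b d] J sp unfolding sepP_def by auto
    have "sepP (rho c) (rho d) (rho b) (rho a)" using sepP_sym(2)[OF sepP_sym(3)[OF sp]] .
    then have n2: "\<not> sepP (psi c) (psi b) (psi d) (psi a)"
      using s5[of c b d a] J unfolding sepP_def by auto
    have "distinct [psi a, psi b, psi c, psi d]" using rdist J by auto
    then have "sepP (psi a) (psi b) (psi c) (psi d) \<or> sepP (psi a) (psi c) (psi b) (psi d) \<or> sepP (psi a) (psi d) (psi b) (psi c)"
      using sepP_F2 rS J by blast
    moreover have "\<not> sepP (psi a) (psi d) (psi b) (psi c)"
    proof
      assume "sepP (psi a) (psi d) (psi b) (psi c)"
      then have "sepP (psi c) (psi b) (psi d) (psi a)" using sepP_sym by blast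
      then show False using n2 by blast
    qed
    ultimately show ?thesis using n1 by blast
  qed
  define good where "good a b c \<longleftrightarrow> (ccw (rho a) (rho b) (rho c) \<longleftrightarrow> ccw (psi a) (psi b) (psi c))" for a b c
  have ccw_cyc_iff: "ccw x y z \<longleftrightarrow> ccw y z x" for x y z using ccw_cyclic by blast
  have ccw_sw_iff: "ccw y x z \<longleftrightarrow> \<not> ccw x y z" if "x \<in> S1" "y \<in> S1" "z \<in> S1" "distinct [x, y, z]" for x y z
  proof -
    have "ccw y x z \<longleftrightarrow> ccw x z y" using ccw_cyc_iff by blast
    also have "\<dots> \<longleftrightarrow> \<not> ccw x y z" using ccw_swap that by auto
    finally show ?thesis .
  qed
  have gcyc: "good a b c = good b c a" if "a \<in> A" "b \<in> A" "c \<in> A" "distinct [a, b, c]" for a b c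
    unfolding good_def using ccw_cyc_iff by blast
  have gsw: "good a b c = good b a c" if J: "a \<in> A" "b \<in> A" "c \<in> A" "distinct [a, b, c]" for a b c
  proof -
    have "ccw (rho b) (rho a) (rho c) \<longleftrightarrow> \<not> ccw (rho a) (rho b) (rho c)"
      using ccw_sw_iff rS rdist J by auto
    moreover have "ccw (psi b) (psi a) (psi c) \<longleftrightarrow> \<not> ccw (psi a) (psi b) (psi c)"
      using ccw_sw_iff rS rdist J by auto
    ultimately show ?thesis unfolding good_def by blast
  qed
  have gst: "good a b c = good a b d" if J: "a \<in> A" "b \<in> A" "c \<in> A" "d \<in> A" "distinct [a, b, c, d]" for a b c d
  proof -
    have dr: "distinct [rho a, rho b, rho c, rho d]" and dp: "distinct [psi a, psi b, psi c, psi d]"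
      using rdist J by auto
    have F3r: "(ccw (rho a) (rho b) (rho c) \<longleftrightarrow> ccw (rho a) (rho b) (rho d)) \<longleftrightarrow> \<not> sepP (rho a) (rho b) (rho c) (rho d)"
      by (rule sepP_F3[OF rS(1)[OF J(1)] rS(1)[OF J(2)] rS(1)[OF J(3)] rS(1)[OF J(4)] dr])
    have F3p: "(ccw (psi a) (psi b) (psi c) \<longleftrightarrow> ccw (psi a) (psi b) (psi d)) \<longleftrightarrow> \<not> sepP (psi a) (psi b) (psi c) (psi d)"
      by (rule sepP_F3[OF rS(2)[OF J(1)] rS(2)[OF J(2)] rS(2)[OF J(3)] rS(2)[OF J(4)] dp])
    have "sepP (rho a) (rho b) (rho c) (rho d) \<longleftrightarrow> sepP (psi a) (psi b) (psi c) (psi d)"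
    proof
      assume "sepP (rho a) (rho b) (rho c) (rho d)"
      then show "sepP (psi a) (psi b) (psi c) (psi d)" using Q J by blast
    next
      assume sp: "sepP (psi a) (psi b) (psi c) (psi d)"
      show "sepP (rho a) (rho b) (rho c) (rho d)"
      proof (rule ccontr)
        assume "\<not> sepP (rho a) (rho b) (rho c) (rho d)"
        then have "sepP (rho a) (rho c) (rho b) (rho d) \<or> sepP (rho a) (rho d) (rho b) (rho c)"
          using sepP_F2 rS J dr by blast
        then have "sepP (psi a) (psi c) (psi b) (psi d) \<or> sepP (psi a) (psi d) (psi b) (psi c)"
        proof
          assume "sepP (rho a) (rho c) (rho b) (rho d)"
          then show ?thesis using Q[of a c b d] J by auto
        next
          assume "sepP (rho a) (rho d) (rho b) (rho c)"
          then show ?thesis using Q[of a d b c] J by auto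
        qed
        moreover have "\<not> sepP (psi a) (psi d) (psi b) (psi c)"
        proof
          assume "sepP (psi a) (psi d) (psi b) (psi c)"
          then have "\<not> sepP (psi a) (psi b) (psi d) (psi c)" by (rule sepP_F4)
          moreover have "sepP (psi a) (psi b) (psi d) (psi c)" using sepP_sym(2)[OF sp] .
          ultimately show False by blast
        qed
        ultimately have "sepP (psi a) (psi c) (psi b) (psi d)" by blast
        then have "\<not> sepP (psi a) (psi b) (psi c) (psi d)" by (rule sepP_F4)
        then show False using sp by blast
      qed
    qed
    then show ?thesis unfolding good_def using F3r F3p by blast
  qed
  have allsame: "good a b c = good d e f" if "a \<in> A" "b \<in> A" "c \<in> A" "d \<in> A" "e \<in> A" "f \<in> A"
    "distinct [a, b, c]" "distinct [d, e, f]" for a b c d e f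
    by (rule chain3[of A good, OF gcyc gsw gst that])
  consider "\<forall>a\<in>A. \<forall>b\<in>A. \<forall>c\<in>A. distinct [a, b, c] \<longrightarrow> good a b c"
    | "\<forall>a\<in>A. \<forall>b\<in>A. \<forall>c\<in>A. distinct [a, b, c] \<longrightarrow> \<not> good a b c"
  proof (cases "\<exists>a\<in>A. \<exists>b\<in>A. \<exists>c\<in>A. distinct [a, b, c] \<and> good a b c")
    case True
    then obtain a b c where abc: "a \<in> A" "b \<in> A" "c \<in> A" "distinct [a, b, c]" "good a b c" by blast
    have "\<forall>d\<in>A. \<forall>e\<in>A. \<forall>f\<in>A. distinct [d, e, f] \<longrightarrow> good d e f"
    proof (intro ballI impI)
      fix d e f assume "d \<in> A" "e \<in> A" "f \<in> A" "distinct [d, e, f]"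
      then show "good d e f" using allsame[of a b c d e f] abc by blast
    qed
    then show ?thesis using that(1) by blast
  next
    case False
    then show ?thesis using that(2) by blast
  qed
  then show ?thesis
  proof cases
    case 1
    have "\<exists>g. circle_homeo g \<and> (\<forall>J\<in>A. g ` J = h J)"
    proof (rule CONS[OF sub disj dense shape sub disj dense shape bij])
      show "\<forall>J\<in>A. is_singleton (h J) = is_singleton J" using sing by auto
      fix J1 J2 J3 x1 x2 x3 y1 y2 y3
      assume J: "J1 \<in> A" "J2 \<in> A" "J3 \<in> A" "distinct [J1, J2, J3]"
        and x: "x1 \<in> J1" "x2 \<in> J2" "x3 \<in> J3" and y: "y1 \<in> h J1" "y2 \<in> h J2" "y3 \<in> h J3"
        and c: "ccw x1 x2 x3"
      have "ccw (rho J1) (rho J2) (rho J3)" using sv[OF J x rho[OF J(1)] rho[OF J(2)] rho[OF J(3)] c] .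
      then have "ccw (psi J1) (psi J2) (psi J3)" using 1 J unfolding good_def by blast
      moreover have "distinct [h J1, h J2, h J3]" using J hinj by auto
      ultimately show "ccw y1 y2 y3" using sv[OF hA[OF J(1)] hA[OF J(2)] hA[OF J(3)] _ psi[OF J(1)] psi[OF J(2)] psi[OF J(3)] y] by blast
    qed
    then show ?thesis unfolding order_preserving_def by blast
  next
    case 2
    define B where "B = (\<lambda>J. cnj ` J) ` A"
    define h' where "h' J = cnj ` h J" for J
    have subB: "\<forall>J\<in>B. J \<noteq> {} \<and> J \<subseteq> S1"
    proof
      fix K assume "K \<in> B"
      then obtain J where J: "J \<in> A" "K = cnj ` J" unfolding B_def by auto
      then have "J \<noteq> {}" "J \<subseteq> S1" using sub by auto
      then show "K \<noteq> {} \<and> K \<subseteq> S1" using J(2) by auto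
    qed
    have disjB: "pairwise disjnt B" unfolding pairwise_def disjnt_def
    proof (intro ballI impI)
      fix K1 K2 assume K: "K1 \<in> B" "K2 \<in> B" "K1 \<noteq> K2"
      obtain J1 where J1: "J1 \<in> A" "K1 = cnj ` J1" using K(1) unfolding B_def by auto
      obtain J2 where J2: "J2 \<in> A" "K2 = cnj ` J2" using K(2) unfolding B_def by auto
      have "J1 \<noteq> J2" using K(3) J1 J2 by auto
      then have e: "J1 \<inter> J2 = {}" using dj J1 J2 by auto
      show "K1 \<inter> K2 = {}"
      proof (rule ccontr)
        assume "K1 \<inter> K2 \<noteq> {}"
        then obtain w where "w \<in> K1" "w \<in> K2" by blast
        then obtain a b where ab: "a \<in> J1" "b \<in> J2" "w = cnj a" "w = cnj b" using J1 J2 by auto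
        then have "a = b" using complex_cnj_cnj by metis
        then show False using ab e by auto
      qed
    qed
    have UB: "\<Union>B = cnj ` (\<Union>A)" unfolding B_def by auto
    have denseB: "closure (\<Union>B) = S1"
    proof
      have "\<Union>B \<subseteq> S1" using subB by auto
      then show "closure (\<Union>B) \<subseteq> S1" by (intro closure_minimal) auto
      have "cnj ` closure (\<Union>A) \<subseteq> closure (\<Union>B)" unfolding UB
        by (rule closure_bounded_linear_image_subset[OF bounded_linear_cnj])
      moreover have "cnj ` S1 = S1" by (auto intro!: image_eqI[of _ cnj "cnj _"])
      ultimately show "S1 \<subseteq> closure (\<Union>B)" using dense by simp
    qed
    have shapeB: "\<forall>J\<in>B. is_singleton J \<or> open_arc J" unfolding B_def using shape open_arc_cnj
      by (auto simp: is_singleton_def)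
    have injc: "inj_on (\<lambda>J. cnj ` J) X" for X :: "complex set set"
      by (rule inj_onI) (metis cnj_img_cnj)
    have bij': "bij_betw h' A B"
      unfolding bij_betw_def
    proof
      show "inj_on h' A" unfolding h'_def inj_on_def using hinj injc[of UNIV] unfolding inj_on_def by blast
      show "h' ` A = B" unfolding h'_def B_def using hsurj by (metis image_comp image_image)
    qed
    have sing': "\<forall>J\<in>A. is_singleton (h' J) = is_singleton J"
    proof
      fix J assume J: "J \<in> A"
      have "is_singleton (cnj ` h J) \<longleftrightarrow> is_singleton (h J)"
        unfolding is_singleton_def by (metis cnj_img_cnj image_empty image_insert)
      then show "is_singleton (h' J) = is_singleton J" unfolding h'_def using sing J by simp
    qed
    have "\<exists>g. circle_homeo g \<and> (\<forall>J\<in>A. g ` J = h' J)"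
    proof (rule CONS[OF sub disj dense shape subB disjB denseB shapeB bij' sing'])
      fix J1 J2 J3 x1 x2 x3 y1 y2 y3
      assume J: "J1 \<in> A" "J2 \<in> A" "J3 \<in> A" "distinct [J1, J2, J3]"
        and x: "x1 \<in> J1" "x2 \<in> J2" "x3 \<in> J3" and y: "y1 \<in> h' J1" "y2 \<in> h' J2" "y3 \<in> h' J3"
        and c: "ccw x1 x2 x3"
      have "ccw (rho J1) (rho J2) (rho J3)" using sv[OF J x rho[OF J(1)] rho[OF J(2)] rho[OF J(3)] c] .
      then have n: "\<not> ccw (psi J1) (psi J2) (psi J3)" using 2 J unfolding good_def by blast
      have "distinct [psi J1, psi J2, psi J3]" using rdist J by auto
      then have "ccw (psi J1) (psi J3) (psi J2)" using ccw_total[of "psi J1" "psi J2" "psi J3"] n rS J by auto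
      moreover have dh: "distinct [h J1, h J3, h J2]" using J hinj by auto
      moreover obtain z1 z2 z3 where z: "z1 \<in> h J1" "z2 \<in> h J2" "z3 \<in> h J3" "y1 = cnj z1" "y2 = cnj z2" "y3 = cnj z3"
        using y unfolding h'_def by auto
      ultimately have "ccw z1 z3 z2" using sv[OF hA[OF J(1)] hA[OF J(3)] hA[OF J(2)] dh psi[OF J(1)] psi[OF J(3)] psi[OF J(2)]] by blast
      then show "ccw y1 y2 y3" using ccw_cnj z by auto
    qed
    then obtain g where g: "circle_homeo g" "\<forall>J\<in>A. g ` J = h' J" by blast
    have "circle_homeo (cnj \<circ> g)" using circle_homeo_comp[OF g(1) circle_homeo_cnj] .
    moreover have "\<forall>J\<in>A. (cnj \<circ> g) ` J = h J"
    proof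
      fix J assume "J \<in> A"
      then have "g ` J = cnj ` h J" using g(2) unfolding h'_def by auto
      then have "cnj ` g ` J = h J" by simp
      then show "(cnj \<circ> g) ` J = h J" by (simp add: image_comp)
    qed
    ultimately show ?thesis unfolding order_preserving_def by blast
  qed
qed

theorem mainTheorem3:
  fixes A :: "complex set set" and h :: "complex set \<Rightarrow> complex set"
  assumes sub: "\<forall>J\<in>A. J \<noteq> {} \<and> J \<subseteq> S1"
    and disj: "pairwise disjnt A"
    and card4: "infinite A \<or> card A \<ge> 4"
    and dense: "closure (\<Union>A) = S1"
    and shape: "\<forall>J\<in>A. is_singleton J \<or> open_arc J"
    and bij: "bij_betw h A A"
    and nonsing: "h ` {J\<in>A. \<not> is_singleton J} = {J\<in>A. \<not> is_singleton J}"
  shows "order_preserving A h \<longleftrightarrow>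
    (\<forall>J1\<in>A. \<forall>J2\<in>A. \<forall>J3\<in>A. \<forall>J4\<in>A. set_cyc4 J1 J2 J3 J4 \<longrightarrow>
       (\<exists>C\<in>components (S1 - (h J1 \<union> h J2)). h J3 \<subseteq> C \<and> h J4 \<subseteq> C))"
proof
  assume "order_preserving A h"
  then obtain g where g: "circle_homeo g" "\<forall>J\<in>A. g ` J = h J" unfolding order_preserving_def by blast
  have conA: "\<forall>J\<in>A. connected J \<and> J \<subseteq> S1" using sub shape connected_singleton_or_arc by blast
  show "\<forall>J1\<in>A. \<forall>J2\<in>A. \<forall>J3\<in>A. \<forall>J4\<in>A. set_cyc4 J1 J2 J3 J4 \<longrightarrow>
       (\<exists>C\<in>components (S1 - (h J1 \<union> h J2)). h J3 \<subseteq> C \<and> h J4 \<subseteq> C)"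
    using FWD[OF conA g] by blast
next
  assume "\<forall>J1\<in>A. \<forall>J2\<in>A. \<forall>J3\<in>A. \<forall>J4\<in>A. set_cyc4 J1 J2 J3 J4 \<longrightarrow>
       (\<exists>C\<in>components (S1 - (h J1 \<union> h J2)). h J3 \<subseteq> C \<and> h J4 \<subseteq> C)"
  then show "order_preserving A h" using CONV[OF sub disj dense shape bij nonsing] by blast
qed

end
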